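(* Consider the system $\dot x(t)=f(x_t,u(t))$ with delay-free output $y(t)=h_0(x(t))$ as in the context, and write, for $\xi\in\mathcal X^n$, $u\in\mathcal M$, $y(\tau)=h_0(x(\tau,\xi,u))$ for $\tau\ge-\theta$ (so $y(\tau)=h_0(\xi(\tau))$ for $\tau\in[-\theta,0]$), and $y_0\in\mathcal X^p$, $y_0(s)=h_0(\xi(s))$, so that $\|y_0\|_{\mathcal X}=H(\xi)$. 1. Suppose the system is GS and there exist $\beta\in\mathcal{KL}$, $\kappa,\gamma\in\mathcal N$ with $\kappa(s)<s$ for all $s>0$ such that for all $\xi\in\mathcal X^n$, $u\in\mathcal M$ and all $t\ge0$, $|y(t)|\le\max\{\beta(\|\xi\|_{\mathcal X},t),\ \kappa(\max_{\tau\in[-\theta,t]}|y(\tau)|),\ \gamma(\|u\|)\}$. Then the system is IOS. 2. Suppose the system is UBIBS and there exist $\beta\in\mathcal{KL}$, $\rho,\kappa,\gamma\in\mathcal N$ with $\kappa(s)<s$ for all $s>0$ such that for all $\xi,u$ and all $t\ge0$, $|y(t)|\le\max\{\beta(\|y_0\|_{\mathcal X},\ t/(1+\rho(\|\xi\|_{\mathcal X}))),\ \kappa(\max_{\tau\in[-\theta,t]}|y(\tau)|),\ \gamma(\|u\|)\}$. Then the system is OL-IOS in the history norm. 3. Suppose the system is forward complete and there exist $\beta\in\mathcal{KL}$, $\kappa,\gamma\in\mathcal N$ with $\kappa(s)<s$ for all $s>0$ such that for all $\xi,u$ and all $t\ge0$, $|y(t)|\le\max\{\beta(\|y_0\|_{\mathcal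 X},t),\ \kappa(\max_{\tau\in[-\theta,t]}|y(\tau)|),\ \gamma(\|u\|)\}$. Then the system is SI-IOS in the history norm.
   Context: Fix $\theta>0$. For $k\ge1$, $\mathcal X^k=C([-\theta,0],\mathbb R^k)$ with norm $\|\xi\|_{\mathcal X}=\max_{s\in[-\theta,0]}|\xi(s)|$. $\mathcal M$ is the set of measurable, locally essentially bounded $u:\mathbb R_{\ge0}\to\mathbb R^m$, $\|u\|$ its essential supremum on $[0,\infty)$. Classes: $\mathcal N$ = continuous nondecreasing $\sigma:\mathbb R_{\ge0}\to\mathbb R_{\ge0}$ with $\sigma(0)=0$; $\mathcal K$ = strictly increasing members of $\mathcal N$; $\mathcal K_\infty$ = members of $\mathcal K$ onto $\mathbb R_{\ge0}$; $\mathcal{KL}$ = $\beta(s,t)$ of class $\mathcal K$ in $s$ for each $t$ and decreasing to $0$ as $t\to\infty$ for each $s$. The system is $\dot x(t)=f(x_t,u(t))$, where $x_t(s)=x(t+s)$, $f:\mathcal X^n\times\mathbb R^m\to\mathbb R^n$ is locally Lipschitz and maps bounded sets to bounded sets; $x(\cdot,\xi,u)$ denotes the unique maximal solution with initial history $\xi\in\mathcal X^n$ and input $u\in\mathcal M$, $x_t^{\xi,u}$ its history segment. The output is $y(t)=h_0(x(t))$ with $h_0:\mathbb R^n\to\mathbb R^p$ continuous (i.e. output map $h(\xi)=h_0(\xi(0))$, with $|h(\xi)|\le\pi(\|\xi\|_{\mathcal X})$ for some $\pi\in\mathcal N$). Forward complete: all maximal solutions exist for all $t\ge0$. The output history map is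 $H(\xi)=\max_{s\in[-\theta,0]}|h_0(\xi(s))|$. UBIBS: there exist $\sigma\in\mathcal K_\infty$, $\mu\in\mathcal N$, $c>0$ with $|x(t,\xi,u)|\le\sigma(\|\xi\|_{\mathcal X})+\mu(\|u\|)+c$ for all $t\ge0,\xi,u$. GS: the same holds with $c=0$. IOS: forward complete and there are $\beta\in\mathcal{KL},\gamma\in\mathcal N$ with $|y(t,\xi,u)|\le\beta(\|\xi\|_{\mathcal X},t)+\gamma(\|u\|)$ for all $t\ge0,\xi,u$. OL-IOS in the history norm: IOS and there is $\sigma_1\in\mathcal K$ with $|y(t,\xi,u)|\le\max\{\sigma_1(H(\xi)),\sigma_1(\|u\|)\}$ for all $t\ge0,\xi,u$. SI-IOS in the history norm: forward complete and there are $\beta\in\mathcal{KL},\gamma\in\mathcal N$ with $|y(t,\xi,u)|\le\beta(H(\xi),t)+\gamma(\|u\|)$ for all $t\ge0,\xi,u$. *)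

theory Defs
  imports "HOL-Analysis.Analysis"
begin

definition classN :: "(real \<Rightarrow> real) \<Rightarrow> bool" where
  "classN \<sigma> \<longleftrightarrow> \<sigma> 0 = 0 \<and> continuous_on {0..} \<sigma> \<and> mono_on {0..} \<sigma> \<and> (\<forall>s\<ge>0. \<sigma> s \<ge> 0)"

definition classK :: "(real \<Rightarrow> real) \<Rightarrow> bool" where
  "classK \<sigma> \<longleftrightarrow> classN \<sigma> \<and> strict_mono_on {0..} \<sigma>"

definition classKinf :: "(real \<Rightarrow> real) \<Rightarrow> bool" where
  "classKinf \<sigma> \<longleftrightarrow> classK \<sigma> \<and> \<sigma> ` {0..} = {0..}"

definition classKL :: "(real \<Rightarrow> real \<Rightarrow> real) \<Rightarrow> bool" where
  "classKL \<beta> \<longleftrightarrow> (\<forall>t\<ge>0. classK (\<lambda>s. \<beta> s t)) \<and>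
     (\<forall>s\<ge>0. antimono_on {0..} (\<lambda>t. \<beta> s t) \<and> ((\<lambda>t. \<beta> s t) \<longlongrightarrow> 0) at_top)"

text \<open>A history is a function on the reals; only its values on [-theta,0] matter.
  The history space X is the set of functions continuous on [-theta,0].\<close>

definition Xspace :: "real \<Rightarrow> (real \<Rightarrow> 'a::real_normed_vector) set" where
  "Xspace \<theta> = {\<xi>. continuous_on {-\<theta>..0} \<xi>}"

definition hnorm :: "real \<Rightarrow> (real \<Rightarrow> 'a::real_normed_vector) \<Rightarrow> real" where
  "hnorm \<theta> \<xi> = Sup ((\<lambda>s. norm (\<xi> s)) ` {-\<theta>..0})"

definition Mspace :: "(real \<Rightarrow> 'a::euclidean_space) set" where
  "Mspace = {u. set_borel_measurable lborel {0..} u \<and>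
      (\<forall>T. \<exists>B. AE s in lborel. s \<in> {0..T} \<longrightarrow> norm (u s) \<le> B)}"

definition ess_bounded :: "(real \<Rightarrow> 'a::real_normed_vector) \<Rightarrow> bool" where
  "ess_bounded u \<longleftrightarrow> (\<exists>B. AE s in lborel. 0 \<le> s \<longrightarrow> norm (u s) \<le> B)"

text \<open>Essential supremum of the input on [0,\<infinity>) (meaningful when ess_bounded u).\<close>
definition unorm :: "(real \<Rightarrow> 'a::real_normed_vector) \<Rightarrow> real" where
  "unorm u = Inf {B. AE s in lborel. 0 \<le> s \<longrightarrow> norm (u s) \<le> B}"

definition is_sol ::
  "((real \<Rightarrow> 'n::euclidean_space) \<Rightarrow> 'm::euclidean_space \<Rightarrow> 'n) \<Rightarrow> real \<Rightarrow>
   (real \<Rightarrow> 'n) \<Rightarrow> (real \<Rightarrow> 'm) \<Rightarrow> real \<Rightarrow> (real \<Rightarrow> 'n) \<Rightarrow> bool" where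
  "is_sol f \<theta> \<xi> u T x \<longleftrightarrow>
     (\<forall>s\<in>{-\<theta>..0}. x s = \<xi> s) \<and> continuous_on {-\<theta>..T} x \<and>
     (\<forall>t\<in>{0..T}. ((\<lambda>s. f (\<lambda>r. x (s + r)) (u s)) has_integral (x t - x 0)) {0..t})"

definition forward_complete ::
  "((real \<Rightarrow> 'n::euclidean_space) \<Rightarrow> 'm::euclidean_space \<Rightarrow> 'n) \<Rightarrow> real \<Rightarrow> bool" where
  "forward_complete f \<theta> \<longleftrightarrow>
     (\<forall>\<xi>\<in>Xspace \<theta>. \<forall>u\<in>Mspace. \<exists>x. \<forall>T\<ge>0. is_sol f \<theta> \<xi> u T x)"

definition loc_lipschitz ::
  "((real \<Rightarrow> 'n::euclidean_space) \<Rightarrow> 'm::euclidean_space \<Rightarrow> 'n) \<Rightarrow> real \<Rightarrow> bool" where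
  "loc_lipschitz f \<theta> \<longleftrightarrow>
     (\<forall>\<xi>\<in>Xspace \<theta>. \<forall>v. \<exists>r>0. \<exists>L. \<forall>\<xi>1\<in>Xspace \<theta>. \<forall>\<xi>2\<in>Xspace \<theta>. \<forall>v1 v2.
        hnorm \<theta> (\<xi>1 - \<xi>) < r \<and> hnorm \<theta> (\<xi>2 - \<xi>) < r \<and> norm (v1 - v) < r \<and> norm (v2 - v) < r
        \<longrightarrow> norm (f \<xi>1 v1 - f \<xi>2 v2) \<le> L * (hnorm \<theta> (\<xi>1 - \<xi>2) + norm (v1 - v2)))"

definition bounded_on_bounded ::
  "((real \<Rightarrow> 'n::euclidean_space) \<Rightarrow> 'm::euclidean_space \<Rightarrow> 'n) \<Rightarrow> real \<Rightarrow> bool" where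
  "bounded_on_bounded f \<theta> \<longleftrightarrow>
     (\<forall>R. \<exists>B. \<forall>\<xi>\<in>Xspace \<theta>. \<forall>v. hnorm \<theta> \<xi> \<le> R \<and> norm v \<le> R \<longrightarrow> norm (f \<xi> v) \<le> B)"

text \<open>UBIBS / GS: the estimate is asserted for all t \<ge> 0, which presupposes that the
  solution exists for all t \<ge> 0 (forward completeness).\<close>

definition UBIBS ::
  "((real \<Rightarrow> 'n::euclidean_space) \<Rightarrow> 'm::euclidean_space \<Rightarrow> 'n) \<Rightarrow> real \<Rightarrow> bool" where
  "UBIBS f \<theta> \<longleftrightarrow> forward_complete f \<theta> \<and>
     (\<exists>\<sigma> \<mu> c. classKinf \<sigma> \<and> classN \<mu> \<and> c > 0 \<and>
       (\<forall>\<xi>\<in>Xspace \<theta>. \<forall>u\<in>Mspace. ess_bounded u \<longrightarrow> (\<forall>T\<ge>0. \<forall>x. is_sol f \<theta> \<xi> u T x \<longrightarrow>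
          norm (x T) \<le> \<sigma> (hnorm \<theta> \<xi>) + \<mu> (unorm u) + c)))"

definition GS ::
  "((real \<Rightarrow> 'n::euclidean_space) \<Rightarrow> 'm::euclidean_space \<Rightarrow> 'n) \<Rightarrow> real \<Rightarrow> bool" where
  "GS f \<theta> \<longleftrightarrow> forward_complete f \<theta> \<and>
     (\<exists>\<sigma> \<mu>. classKinf \<sigma> \<and> classN \<mu> \<and>
       (\<forall>\<xi>\<in>Xspace \<theta>. \<forall>u\<in>Mspace. ess_bounded u \<longrightarrow> (\<forall>T\<ge>0. \<forall>x. is_sol f \<theta> \<xi> u T x \<longrightarrow>
          norm (x T) \<le> \<sigma> (hnorm \<theta> \<xi>) + \<mu> (unorm u))))"

definition Hout :: "real \<Rightarrow> ('n \<Rightarrow> 'p::real_normed_vector) \<Rightarrow> (real \<Rightarrow> 'n) \<Rightarrow> real" where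
  "Hout \<theta> h0 \<xi> = hnorm \<theta> (\<lambda>s. h0 (\<xi> s))"

definition ymax :: "real \<Rightarrow> ('n \<Rightarrow> 'p::real_normed_vector) \<Rightarrow> (real \<Rightarrow> 'n) \<Rightarrow> real \<Rightarrow> real" where
  "ymax \<theta> h0 x t = Sup ((\<lambda>\<tau>. norm (h0 (x \<tau>))) ` {-\<theta>..t})"

definition IOS ::
  "((real \<Rightarrow> 'n::euclidean_space) \<Rightarrow> 'm::euclidean_space \<Rightarrow> 'n) \<Rightarrow> real \<Rightarrow>
   ('n \<Rightarrow> 'p::euclidean_space) \<Rightarrow> bool" where
  "IOS f \<theta> h0 \<longleftrightarrow> forward_complete f \<theta> \<and>
     (\<exists>\<beta> \<gamma>. classKL \<beta> \<and> classN \<gamma> \<and>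
       (\<forall>\<xi>\<in>Xspace \<theta>. \<forall>u\<in>Mspace. ess_bounded u \<longrightarrow> (\<forall>T\<ge>0. \<forall>x. is_sol f \<theta> \<xi> u T x \<longrightarrow>
          norm (h0 (x T)) \<le> \<beta> (hnorm \<theta> \<xi>) T + \<gamma> (unorm u))))"

definition OL_IOS_hist ::
  "((real \<Rightarrow> 'n::euclidean_space) \<Rightarrow> 'm::euclidean_space \<Rightarrow> 'n) \<Rightarrow> real \<Rightarrow>
   ('n \<Rightarrow> 'p::euclidean_space) \<Rightarrow> bool" where
  "OL_IOS_hist f \<theta> h0 \<longleftrightarrow> IOS f \<theta> h0 \<and>
     (\<exists>\<sigma>1. classK \<sigma>1 \<and>
       (\<forall>\<xi>\<in>Xspace \<theta>. \<forall>u\<in>Mspace. ess_bounded u \<longrightarrow> (\<forall>T\<ge>0. \<forall>x. is_sol f \<theta> \<xi> u T x \<longrightarrow>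
          norm (h0 (x T)) \<le> max (\<sigma>1 (Hout \<theta> h0 \<xi>)) (\<sigma>1 (unorm u)))))"

definition SI_IOS_hist ::
  "((real \<Rightarrow> 'n::euclidean_space) \<Rightarrow> 'm::euclidean_space \<Rightarrow> 'n) \<Rightarrow> real \<Rightarrow>
   ('n \<Rightarrow> 'p::euclidean_space) \<Rightarrow> bool" where
  "SI_IOS_hist f \<theta> h0 \<longleftrightarrow> forward_complete f \<theta> \<and>
     (\<exists>\<beta> \<gamma>. classKL \<beta> \<and> classN \<gamma> \<and>
       (\<forall>\<xi>\<in>Xspace \<theta>. \<forall>u\<in>Mspace. ess_bounded u \<longrightarrow> (\<forall>T\<ge>0. \<forall>x. is_sol f \<theta> \<xi> u T x \<longrightarrow>
          norm (h0 (x T)) \<le> \<beta> (Hout \<theta> h0 \<xi>) T + \<gamma> (unorm u))))"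

end

theory Submission
  imports Defs
begin



lemma is_sol_restrict:
  assumes "is_sol f \<theta> \<xi> u T x" "0 \<le> T'" "T' \<le> T"
  shows "is_sol f \<theta> \<xi> u T' x"
  using assms unfolding is_sol_def
  by (auto intro: continuous_on_subset)

lemma is_sol_shift:
  assumes sol: "is_sol f \<theta> \<xi> u T x" and a: "0 \<le> a" "a \<le> T"
  shows "is_sol f \<theta> (\<lambda>s. x (s + a)) (\<lambda>s. u (s + a)) (T - a) (\<lambda>s. x (s + a))"
  unfolding is_sol_def
proof (intro conjI ballI)
  have c: "continuous_on {-\<theta>..T} x" using sol by (simp add: is_sol_def)
  show "continuous_on {-\<theta>..T - a} (\<lambda>s. x (s + a))"
  proof (rule continuous_on_compose2[OF c])
    show "continuous_on {-\<theta>..T - a} (\<lambda>s. s + a)" by (intro continuous_intros)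
    show "(\<lambda>s. s + a) ` {-\<theta>..T - a} \<subseteq> {-\<theta>..T}" using a by auto
  qed
  fix t assume t: "t \<in> {0..T - a}"
  define g where "g = (\<lambda>s. f (\<lambda>r. x (s + r)) (u s))"
  have I1: "(g has_integral (x (t + a) - x 0)) {0..t + a}"
    using sol t a unfolding is_sol_def g_def by auto
  have I2: "(g has_integral (x a - x 0)) {0..a}"
    using sol t a unfolding is_sol_def g_def by auto
  have "g integrable_on {0..t+a}" using I1 by (rule has_integral_integrable)
  then have "g integrable_on {a..t+a}"
    by (rule integrable_subinterval_real) (use t a in auto)
  then obtain J where J: "(g has_integral J) {a..t+a}" by blast
  from has_integral_combine[OF _ _ I2 J] t a have "(g has_integral (x a - x 0 + J)) {0..t+a}" by auto
  from has_integral_unique[OF this I1] have "J = x (t + a) - x a" by (simp add: algebra_simps)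
  with J have "(g has_integral (x (t + a) - x a)) {a..t+a}" by simp
  from has_integral_shift_real_ivl[OF this, of a]
  have "((\<lambda>s. g (s + a)) has_integral (x (t + a) - x a)) {0..t}" by simp
  moreover have "(\<lambda>s. g (s + a)) = (\<lambda>s. f (\<lambda>r. x (s + r + a)) (u (s + a)))"
    unfolding g_def by (auto simp: algebra_simps)
  ultimately show "((\<lambda>s. f (\<lambda>r. x (s + r + a)) (u (s + a))) has_integral (x (t + a) - x (0 + a))) {0..t}"
    by simp
qed auto





lemma AE_lborel_shift:
  assumes "AE s in lborel. P s"
  shows "AE s in lborel. P (s + (c::real))"
proof -
  have e: "distr lborel borel ((+) c) = (lborel::real measure)" by (rule lborel_distr_plus)
  have "AE s in distr lborel borel ((+) c). P s" unfolding e by (rule assms)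
  from AE_distrD[OF _ this] show ?thesis by (simp add: add.commute)
qed

lemma AE_bound_nonneg:
  assumes "AE s in lborel. 0 \<le> (s::real) \<longrightarrow> norm (v s) \<le> (B::real)"
  shows "0 \<le> B"
proof (rule ccontr)
  assume nB: "\<not> 0 \<le> B"
  have "AE s in lborel. (s::real) \<notin> {0..}"
  proof (rule eventually_mono[OF assms(1)])
    fix s assume "0 \<le> s \<longrightarrow> norm (v s) \<le> B"
    then show "s \<notin> {0..}" using nB norm_ge_zero[of "v s"] by auto
  qed
  then have "emeasure lborel {0::real..} = 0"
    by (subst (asm) AE_iff_measurable[of "{0..}"]) auto
  moreover have "emeasure lborel {0::real..1} \<le> emeasure lborel {0::real..}"
    by (rule emeasure_mono) auto
  ultimately show False by simp
qed

lemma unorm_nonneg: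
  assumes "ess_bounded u" shows "0 \<le> unorm u"
  using assms unfolding ess_bounded_def unorm_def
  by (intro cInf_greatest) (auto intro: AE_bound_nonneg)

lemma Mspace_shift:
  assumes "u \<in> Mspace" "0 \<le> (a::real)"
  shows "(\<lambda>s. u (s + a)) \<in> Mspace"
proof -
  have m: "(\<lambda>s. indicator {0..} s *\<^sub>R u s) \<in> borel_measurable lborel"
    using assms by (simp add: Mspace_def set_borel_measurable_def)
  have m2: "(\<lambda>s. indicator {0..} (s + a) *\<^sub>R u (s + a)) \<in> borel_measurable lborel"
    using measurable_compose[OF _ m, of "\<lambda>s. s + a" lborel] by simp
  have eq: "(\<lambda>s. indicator {0..} s *\<^sub>R u (s + a)) =
       (\<lambda>s. indicator {0::real..} s *\<^sub>R (indicator {0..} (s + a) *\<^sub>R u (s + a)))"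
    using assms(2) by (auto simp: indicator_def)
  have "(\<lambda>s. indicator {0..} s *\<^sub>R u (s + a)) \<in> borel_measurable lborel"
    unfolding eq by (intro borel_measurable_scaleR m2) auto
  moreover have "\<exists>B. AE s in lborel. s \<in> {0..T} \<longrightarrow> norm (u (s + a)) \<le> B" for T
  proof -
    obtain B where "AE s in lborel. s \<in> {0..T + a} \<longrightarrow> norm (u s) \<le> B"
      using assms by (auto simp: Mspace_def)
    from AE_lborel_shift[OF this, of a] have "AE s in lborel. s \<in> {0..T} \<longrightarrow> norm (u (s + a)) \<le> B"
      by (rule eventually_mono) (use assms(2) in auto)
    then show ?thesis by blast
  qed
  ultimately show ?thesis by (simp add: Mspace_def set_borel_measurable_def)
qed

lemma ess_bounded_shift:
  assumes "ess_bounded u" "0 \<le> (a::real)"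
  shows "ess_bounded (\<lambda>s. u (s + a)) \<and> unorm (\<lambda>s. u (s + a)) \<le> unorm u"
proof -
  have sub: "{B. AE s in lborel. 0 \<le> s \<longrightarrow> norm (u s) \<le> B} \<subseteq>
             {B. AE s in lborel. 0 \<le> s \<longrightarrow> norm (u (s + a)) \<le> B}"
  proof
    fix B assume "B \<in> {B. AE s in lborel. 0 \<le> s \<longrightarrow> norm (u s) \<le> B}"
    then have "AE s in lborel. 0 \<le> s \<longrightarrow> norm (u s) \<le> B" by simp
    from AE_lborel_shift[OF this, of a] show "B \<in> {B. AE s in lborel. 0 \<le> s \<longrightarrow> norm (u (s + a)) \<le> B}"
      by (auto elim!: eventually_mono simp: assms(2))
  qed
  have ne: "{B. AE s in lborel. 0 \<le> s \<longrightarrow> norm (u s) \<le> B} \<noteq> {}"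
    using assms by (auto simp: ess_bounded_def)
  have "ess_bounded (\<lambda>s. u (s + a))" using sub ne by (auto simp: ess_bounded_def)
  moreover have "bdd_below {B. AE s in lborel. 0 \<le> s \<longrightarrow> norm (u (s + a)) \<le> B}"
    by (rule bdd_belowI[of _ 0]) (auto intro: AE_bound_nonneg)
  ultimately show ?thesis unfolding unorm_def using cInf_superset_mono[OF ne _ sub] by auto
qed





definition clamp01 :: "real \<Rightarrow> real" where "clamp01 x = min 1 (max 0 x)"

lemma clamp01_cont: "isCont clamp01 x"
  unfolding clamp01_def by (intro continuous_intros)

lemma clamp01_mono: "x \<le> y \<Longrightarrow> clamp01 x \<le> clamp01 y"
  unfolding clamp01_def by auto

lemma clamp01_nonneg: "0 \<le> clamp01 x" unfolding clamp01_def by auto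

definition psiK :: "(real \<Rightarrow> real \<Rightarrow> real) \<Rightarrow> nat \<Rightarrow> real \<Rightarrow> real \<Rightarrow> real" where
  "psiK w K r t = (\<Sum>n<K. w (real n + 1) t * clamp01 (r + 1 - real n))"

definition psi :: "(real \<Rightarrow> real \<Rightarrow> real) \<Rightarrow> real \<Rightarrow> real \<Rightarrow> real" where
  "psi w r t = psiK w (nat \<lceil>r\<rceil> + 2) r t"

lemma psi_eq:
  assumes "nat \<lceil>r\<rceil> + 2 \<le> K"
  shows "psi w r t = psiK w K r t"
  unfolding psi_def psiK_def
proof (rule sum.mono_neutral_left)
  show "\<forall>i\<in>{..<K} - {..<nat \<lceil>r\<rceil> + 2}. w (real i + 1) t * clamp01 (r + 1 - real i) = 0"
  proof
    fix i assume "i \<in> {..<K} - {..<nat \<lceil>r\<rceil> + 2}"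
    then have "real i \<ge> real (nat \<lceil>r\<rceil>) + 2" by auto
    moreover have "real (nat \<lceil>r\<rceil>) \<ge> r" by linarith
    ultimately have "r + 1 - real i \<le> 0" by linarith
    then show "w (real i + 1) t * clamp01 (r + 1 - real i) = 0" by (simp add: clamp01_def)
  qed
qed (use assms in auto)

lemma psi_cont: "isCont (\<lambda>r. psi w r t) r0"
proof -
  define K where "K = nat \<lceil>r0\<rceil> + 3"
  have "eventually (\<lambda>r. r \<in> {..<r0 + 1}) (nhds r0)"
    by (rule eventually_nhds_in_open) auto
  then have ev: "eventually (\<lambda>r. r < r0 + 1) (nhds r0)" by simp
  have e: "eventually (\<lambda>r. psi w r t = psiK w K r t) (nhds r0)"
  proof (rule eventually_mono[OF ev])
    fix r assume "r < r0 + 1"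
    then have "nat \<lceil>r\<rceil> + 2 \<le> K" unfolding K_def by linarith
    then show "psi w r t = psiK w K r t" by (rule psi_eq)
  qed
  have "isCont (\<lambda>r. psiK w K r t) r0"
    unfolding psiK_def by (intro continuous_intros isCont_o2[OF _ clamp01_cont])
  then show ?thesis using isCont_cong[OF e] by simp
qed

context
  fixes w :: "real \<Rightarrow> real \<Rightarrow> real"
  assumes nonneg0: "\<forall>r t. 0 \<le> r \<longrightarrow> 0 \<le> t \<longrightarrow> 0 \<le> w r t"
    and monor0: "\<forall>r r' t. 0 \<le> r \<longrightarrow> r \<le> r' \<longrightarrow> 0 \<le> t \<longrightarrow> w r t \<le> w r' t"
    and monot0: "\<forall>r t t'. 0 \<le> r \<longrightarrow> 0 \<le> t \<longrightarrow> t \<le> t' \<longrightarrow> w r t' \<le> w r t"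
    and lim0: "\<forall>r. 0 \<le> r \<longrightarrow> ((\<lambda>t. w r t) \<longlongrightarrow> 0) at_top"
begin

lemma cnonneg: "0 \<le> r \<Longrightarrow> 0 \<le> t \<Longrightarrow> 0 \<le> w r t" using nonneg0 by blast
lemma cmonor: "0 \<le> r \<Longrightarrow> r \<le> r' \<Longrightarrow> 0 \<le> t \<Longrightarrow> w r t \<le> w r' t" using monor0 by blast
lemma cmonot: "0 \<le> r \<Longrightarrow> 0 \<le> t \<Longrightarrow> t \<le> t' \<Longrightarrow> w r t' \<le> w r t" using monot0 by blast
lemma clim: "0 \<le> r \<Longrightarrow> ((\<lambda>t. w r t) \<longlongrightarrow> 0) at_top" using lim0 by blast


lemma psi_nonneg: "0 \<le> t \<Longrightarrow> 0 \<le> psi w r t"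
  unfolding psi_def psiK_def
  by (intro sum_nonneg mult_nonneg_nonneg cnonneg clamp01_nonneg) auto

lemma psi_ge: assumes "0 \<le> r" "0 \<le> t" shows "w r t \<le> psi w r t"
proof -
  define m where "m = nat \<lfloor>r\<rfloor>"
  have rm: "real m \<le> r" "r \<le> real m + 1" unfolding m_def using assms by linarith+
  have "m < nat \<lceil>r\<rceil> + 2" unfolding m_def by linarith
  have "w r t \<le> w (real m + 1) t" using rm assms by (intro cmonor) auto
  also have "\<dots> = w (real m + 1) t * clamp01 (r + 1 - real m)"
    using rm by (simp add: clamp01_def)
  also have "\<dots> \<le> psi w r t"
    unfolding psi_def psiK_def
    by (rule member_le_sum) (use \<open>m < _\<close> assms in \<open>auto intro!: mult_nonneg_nonneg cnonneg clamp01_nonneg\<close>)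
  finally show ?thesis .
qed

lemma psi_mono_r: assumes "r1 \<le> r2" "0 \<le> t" shows "psi w r1 t \<le> psi w r2 t"
proof -
  define K where "K = nat \<lceil>r2\<rceil> + 2"
  have "nat \<lceil>r1\<rceil> \<le> nat \<lceil>r2\<rceil>" by (intro nat_mono ceiling_mono) (use assms in auto)
  then have K1: "nat \<lceil>r1\<rceil> + 2 \<le> K" unfolding K_def by simp
  have K2: "nat \<lceil>r2\<rceil> + 2 \<le> K" unfolding K_def by simp
  have "psiK w K r1 t \<le> psiK w K r2 t"
    unfolding psiK_def
  proof (rule sum_mono)
    fix n assume "n \<in> {..<K}"
    have "clamp01 (r1 + 1 - real n) \<le> clamp01 (r2 + 1 - real n)"
      by (rule clamp01_mono) (use assms in auto)
    moreover have "0 \<le> w (real n + 1) t" by (rule cnonneg) (use assms in auto)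
    ultimately show "w (real n + 1) t * clamp01 (r1 + 1 - real n) \<le> w (real n + 1) t * clamp01 (r2 + 1 - real n)"
      by (rule mult_left_mono)
  qed
  then show ?thesis unfolding psi_eq[OF K1] psi_eq[OF K2] .
qed

lemma psi_mono_t: assumes "t1 \<le> t2" "0 \<le> t1" shows "psi w r t2 \<le> psi w r t1"
  unfolding psi_def psiK_def
  by (intro sum_mono mult_right_mono cmonot clamp01_nonneg) (use assms in auto)

lemma psi_lim: "((\<lambda>t. psi w r t) \<longlongrightarrow> 0) at_top"
  unfolding psi_def psiK_def
  by (intro tendsto_null_sum tendsto_mult_left_zero clim) auto

end

lemma KL_majorant:
  fixes w :: "real \<Rightarrow> real \<Rightarrow> real" and \<sigma> :: "real \<Rightarrow> real"
  assumes \<sigma>: "classK \<sigma>"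
    and nonneg: "\<And>r t. 0 \<le> r \<Longrightarrow> 0 \<le> t \<Longrightarrow> 0 \<le> w r t"
    and bound: "\<And>r t. 0 \<le> r \<Longrightarrow> 0 \<le> t \<Longrightarrow> w r t \<le> \<sigma> r"
    and monor: "\<And>r r' t. 0 \<le> r \<Longrightarrow> r \<le> r' \<Longrightarrow> 0 \<le> t \<Longrightarrow> w r t \<le> w r' t"
    and monot: "\<And>r t t'. 0 \<le> r \<Longrightarrow> 0 \<le> t \<Longrightarrow> t \<le> t' \<Longrightarrow> w r t' \<le> w r t"
    and lim: "\<And>r. 0 \<le> r \<Longrightarrow> ((\<lambda>t. w r t) \<longlongrightarrow> 0) at_top"
  shows "\<exists>\<beta>. classKL \<beta> \<and> (\<forall>r\<ge>0. \<forall>t\<ge>0. w r t \<le> \<beta> r t)"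
proof -
  have A0: "\<forall>r t. 0 \<le> r \<longrightarrow> 0 \<le> t \<longrightarrow> 0 \<le> w r t" using nonneg by blast
  have A1: "\<forall>r r' t. 0 \<le> r \<longrightarrow> r \<le> r' \<longrightarrow> 0 \<le> t \<longrightarrow> w r t \<le> w r' t" using monor by blast
  have A2: "\<forall>r t t'. 0 \<le> r \<longrightarrow> 0 \<le> t \<longrightarrow> t \<le> t' \<longrightarrow> w r t' \<le> w r t" using monot by blast
  have A3: "\<forall>r. 0 \<le> r \<longrightarrow> ((\<lambda>t. w r t) \<longlongrightarrow> 0) at_top" using lim by blast
  note P = psi_nonneg[OF A0 A1 A2 A3] psi_ge[OF A0 A1 A2 A3]
    psi_mono_r[OF A0 A1 A2 A3] psi_mono_t[OF A0 A1 A2 A3] psi_lim[OF A0 A1 A2 A3]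
  define \<beta> where "\<beta> r t = min (\<sigma> r) (psi w r t + r / (1 + t))" for r t
  have sN: "\<sigma> 0 = 0" "continuous_on {0..} \<sigma>" "strict_mono_on {0..} \<sigma>" "\<And>s. s \<ge> 0 \<Longrightarrow> \<sigma> s \<ge> 0"
    using \<sigma> by (auto simp: classK_def classN_def)
  have K: "classK (\<lambda>s. \<beta> s t)" if t: "t \<ge> 0" for t
  proof -
    have sm: "strict_mono_on {0..} (\<lambda>s. \<beta> s t)"
    proof (rule strict_mono_onI)
      fix r s :: real assume "r \<in> {0..}" "s \<in> {0..}" "r < s"
      then have "\<sigma> r < \<sigma> s" using sN(3) by (simp add: strict_mono_on_def)
      moreover have "psi w r t \<le> psi w s t" using P(3) \<open>r < s\<close> t by auto
      moreover have "r / (1 + t) < s / (1 + t)" using \<open>r < s\<close> t by (simp add: divide_strict_right_mono)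
      ultimately show "\<beta> r t < \<beta> s t" unfolding \<beta>_def by linarith
    qed
    have c1: "continuous_on {0..} (\<lambda>s. psi w s t)"
      by (intro continuous_at_imp_continuous_on ballI psi_cont)
    have c2: "continuous_on {0..} (\<lambda>s. s / (1 + t))"
      by (intro continuous_on_divide continuous_on_id continuous_on_const) (use t in auto)
    have c: "continuous_on {0..} (\<lambda>s. \<beta> s t)"
      unfolding \<beta>_def by (rule continuous_on_min[OF sN(2) continuous_on_add[OF c1 c2]])
    have "0 \<le> psi w 0 t" by (rule P(1)) (rule t)
    then have z: "\<beta> 0 t = 0" unfolding \<beta>_def using sN(1) by simp
    have nn: "\<forall>s\<ge>0. 0 \<le> \<beta> s t"
      unfolding \<beta>_def using sN(4) P(1)[OF t] t by (auto intro!: add_nonneg_nonneg)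
    show ?thesis unfolding classK_def classN_def
      using sm c z nn strict_mono_on_imp_mono_on[OF sm] by auto
  qed
  have L: "antimono_on {0..} (\<lambda>t. \<beta> s t) \<and> ((\<lambda>t. \<beta> s t) \<longlongrightarrow> 0) at_top" if s: "s \<ge> 0" for s
  proof
    show "antimono_on {0..} (\<lambda>t. \<beta> s t)"
    proof (rule monotone_onI)
      fix t1 t2 :: real assume "t1 \<in> {0..}" "t2 \<in> {0..}" "t1 \<le> t2"
      then have "psi w s t2 \<le> psi w s t1" using P(4) by auto
      moreover have "s / (1 + t2) \<le> s / (1 + t1)" using \<open>t1 \<in> _\<close> \<open>t1 \<le> t2\<close> s
        by (intro divide_left_mono) auto
      ultimately show "\<beta> s t2 \<le> \<beta> s t1" unfolding \<beta>_def by linarith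
    qed
    have "filterlim (\<lambda>t::real. 1 + t) at_top at_top"
      by (rule filterlim_tendsto_add_at_top[OF tendsto_const filterlim_ident])
    then have "filterlim (\<lambda>t::real. 1 + t) at_infinity at_top"
      by (rule filterlim_at_top_imp_at_infinity)
    then have "((\<lambda>t. s / (1 + t)) \<longlongrightarrow> 0) at_top"
      by (rule tendsto_divide_0[OF tendsto_const])
    then have l2: "((\<lambda>t. psi w s t + s / (1 + t)) \<longlongrightarrow> 0 + 0) at_top"
      by (intro tendsto_add P(5))
    show "((\<lambda>t. \<beta> s t) \<longlongrightarrow> 0) at_top"
    proof (rule tendsto_sandwich[OF _ _ tendsto_const l2[simplified]])
      have nnb: "0 \<le> \<beta> s t" if "t \<ge> 0" for t
        using K[OF that] s unfolding classK_def classN_def by blast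
      show "\<forall>\<^sub>F t in at_top. 0 \<le> \<beta> s t"
        by (rule eventually_mono[OF eventually_ge_at_top[of 0]]) (rule nnb)
      show "\<forall>\<^sub>F t in at_top. \<beta> s t \<le> psi w s t + s / (1 + t)"
        unfolding \<beta>_def by simp
    qed
  qed
  have "classKL \<beta>" unfolding classKL_def using K L by auto
  moreover have "\<forall>r\<ge>0. \<forall>t\<ge>0. w r t \<le> \<beta> r t"
  proof (intro allI impI)
    fix r t :: real assume "r \<ge> 0" "t \<ge> 0"
    then have "w r t \<le> psi w r t" "0 \<le> r / (1 + t)" "w r t \<le> \<sigma> r" using P(2) bound by auto
    then show "w r t \<le> \<beta> r t" unfolding \<beta>_def by linarith
  qed
  ultimately show ?thesis by blast
qed





lemma classN_mono: "classN \<kappa> \<Longrightarrow> 0 \<le> a \<Longrightarrow> a \<le> b \<Longrightarrow> \<kappa> a \<le> \<kappa> b"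
  unfolding classN_def by (auto intro: mono_onD)

lemma kappa_le: "classN \<kappa> \<Longrightarrow> \<forall>s>0. \<kappa> s < s \<Longrightarrow> 0 \<le> s \<Longrightarrow> \<kappa> s \<le> s"
  unfolding classN_def by (cases "s = 0") (auto simp: less_imp_le)

lemma kappa_max: "classN \<kappa> \<Longrightarrow> 0 \<le> a \<Longrightarrow> 0 \<le> b \<Longrightarrow> \<kappa> (max a b) = max (\<kappa> a) (\<kappa> b)"
  using classN_mono[of \<kappa> a b] classN_mono[of \<kappa> b a] by (auto simp: max_def)

lemma iterate_bound:
  fixes Y \<kappa> :: "real \<Rightarrow> real" and K :: nat
  assumes \<theta>: "\<theta> > 0"
    and Ynn: "\<forall>s\<in>{-\<theta>..T}. 0 \<le> Y s"
    and Ybdd: "bdd_above (Y ` {-\<theta>..T})"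
    and \<kappa>: "classN \<kappa>" and \<kappa>lt: "\<forall>s>0. \<kappa> s < s"
    and \<epsilon>: "0 < \<epsilon>" and g: "0 \<le> g" and \<tau>: "0 \<le> \<tau>" and \<delta>: "0 < \<delta>"
    and \<kappa>\<delta>: "\<forall>s. \<epsilon> < s \<longrightarrow> s \<le> C \<longrightarrow> \<kappa> s \<le> s - \<delta>"
    and S0: "\<forall>s\<in>{-\<theta>..T}. Y s \<le> max C g"
    and step: "\<forall>a t. 0 \<le> a \<longrightarrow> \<tau> \<le> t \<longrightarrow> a + t \<le> T \<longrightarrow>
                  Y (a + t) \<le> max \<epsilon> (max (\<kappa> (Sup (Y ` {a - \<theta>..T}))) g)"
    and Kd: "C - real K * \<delta> \<le> \<epsilon>"
  shows "\<forall>s. real K * (\<tau> + \<theta>) \<le> s \<longrightarrow> s \<le> T \<longrightarrow> Y s \<le> max \<epsilon> g"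
proof -
  define c where "c k = max \<epsilon> (C - real k * \<delta>)" for k :: nat
  define a where "a k = real k * (\<tau> + \<theta>)" for k :: nat
  have a_nn: "0 \<le> a k" for k unfolding a_def using \<tau> \<theta> by simp
  have claim: "a k \<le> T \<longrightarrow> (\<forall>s\<in>{a k - \<theta>..T}. Y s \<le> max (c k) g)" for k
  proof (induction k)
    case 0
    have "max C g \<le> max (max \<epsilon> C) g" by simp
    then show ?case using S0 unfolding a_def c_def by (auto intro: order_trans)
  next
    case (Suc k)
    show ?case
    proof (intro impI ballI)
      assume aS: "a (Suc k) \<le> T"
      have ak: "a k \<le> a (Suc k)" unfolding a_def using \<tau> \<theta> by (simp add: distrib_right)
      with aS Suc.IH have IH: "\<forall>s\<in>{a k - \<theta>..T}. Y s \<le> max (c k) g" by auto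
      define S where "S = Sup (Y ` {a k - \<theta>..T})"
      have ne: "{a k - \<theta>..T} \<noteq> {}" using ak aS \<theta> by auto
      have sub: "{a k - \<theta>..T} \<subseteq> {-\<theta>..T}" using a_nn[of k] by auto
      have bdd: "bdd_above (Y ` {a k - \<theta>..T})" using bdd_above_mono[OF Ybdd image_mono[OF sub]] .
      have S_le: "S \<le> max (c k) g" unfolding S_def using IH ne by (auto intro!: cSup_least)
      have "Y T \<le> S" unfolding S_def using ak aS \<theta> by (intro cSup_upper bdd) auto
      moreover have "0 \<le> Y T" using Ynn ak aS a_nn[of k] \<theta> by auto
      ultimately have S_nn: "0 \<le> S" by linarith
      have c_nn: "0 \<le> c k" unfolding c_def using \<epsilon> by simp
      have "\<kappa> S \<le> \<kappa> (max (c k) g)" using S_nn S_le by (rule classN_mono[OF \<kappa>])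
      also have "\<dots> = max (\<kappa> (c k)) (\<kappa> g)" using kappa_max[OF \<kappa> c_nn g] .
      also have "\<dots> \<le> max (c (Suc k)) g"
      proof -
        have "\<kappa> g \<le> g" using kappa_le[OF \<kappa> \<kappa>lt g] .
        moreover have "\<kappa> (c k) \<le> c (Suc k)"
        proof (cases "C - real k * \<delta> \<le> \<epsilon>")
          case True
          then have "c k = \<epsilon>" unfolding c_def by simp
          then show ?thesis using \<kappa>lt \<epsilon> unfolding c_def by fastforce
        next
          case False
          then have ck: "c k = C - real k * \<delta>" unfolding c_def by simp
          have "\<kappa> (c k) \<le> c k - \<delta>" using \<kappa>\<delta> False ck \<delta> by simp
          moreover have "C - real (Suc k) * \<delta> \<le> c (Suc k)" unfolding c_def by simp
          moreover have "C - real (Suc k) * \<delta> = c k - \<delta>" using ck by (simp add: algebra_simps)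
          ultimately show ?thesis by linarith
        qed
        ultimately show ?thesis by linarith
      qed
      finally have kS: "\<kappa> S \<le> max (c (Suc k)) g" .
      fix s assume s: "s \<in> {a (Suc k) - \<theta>..T}"
      have "s - a k \<ge> \<tau>" using s unfolding a_def by (simp add: algebra_simps)
      moreover have "a k + (s - a k) \<le> T" using s by simp
      ultimately have "Y (a k + (s - a k)) \<le> max \<epsilon> (max (\<kappa> S) g)"
        using step a_nn[of k] unfolding S_def by blast
      then have "Y s \<le> max \<epsilon> (max (\<kappa> S) g)" by simp
      moreover have "\<epsilon> \<le> c (Suc k)" unfolding c_def by simp
      ultimately show "Y s \<le> max (c (Suc k)) g" using kS by auto
    qed
  qed
  show ?thesis
  proof (intro allI impI)
    fix s assume "real K * (\<tau> + \<theta>) \<le> s" "s \<le> T"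
    then have "a K \<le> T" "s \<in> {a K - \<theta>..T}" unfolding a_def using \<theta> by auto
    with claim[of K] have "Y s \<le> max (c K) g" by auto
    moreover have "c K = \<epsilon>" unfolding c_def using Kd by simp
    ultimately show "Y s \<le> max \<epsilon> g" by simp
  qed
qed





lemma hnorm_upper:
  assumes "continuous_on {-\<theta>..0} F" "s \<in> {-\<theta>..0}"
  shows "norm (F s) \<le> hnorm \<theta> F"
proof -
  have "compact ((\<lambda>s. norm (F s)) ` {-\<theta>..0})"
    by (intro compact_continuous_image continuous_intros assms(1)) auto
  then have "bdd_above ((\<lambda>s. norm (F s)) ` {-\<theta>..0})" by (simp add: bounded_imp_bdd_above compact_imp_bounded)
  then show ?thesis unfolding hnorm_def using assms(2) by (intro cSup_upper) auto
qed

lemma hnorm_nonneg: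
  assumes "continuous_on {-\<theta>..0} F" "0 \<le> \<theta>"
  shows "0 \<le> hnorm \<theta> F"
proof -
  have "norm (F 0) \<le> hnorm \<theta> F" using assms by (intro hnorm_upper) auto
  then show ?thesis using norm_ge_zero[of "F 0"] by linarith
qed

lemma hnorm_le:
  assumes "0 \<le> \<theta>" "\<forall>s\<in>{-\<theta>..0}. norm (F s) \<le> B"
  shows "hnorm \<theta> F \<le> B"
  unfolding hnorm_def using assms by (intro cSup_least) auto

lemma image_shift_Icc: "(\<lambda>s. F (s + a)) ` {p..q} = F ` {p + a..q + (a::real)}"
proof -
  have "(\<lambda>s. s + a) ` {p..q} = {p + a..q + a}"
  proof
    show "{p + a..q + a} \<subseteq> (\<lambda>s. s + a) ` {p..q}"
    proof
      fix y assume "y \<in> {p + a..q + a}"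
      then show "y \<in> (\<lambda>s. s + a) ` {p..q}" by (intro image_eqI[of _ _ "y - a"]) auto
    qed
  qed auto
  then show ?thesis by (metis image_image)
qed

lemma Y_cont:
  assumes "is_sol f \<theta> \<xi> u T x" "continuous_on UNIV h0"
  shows "continuous_on {-\<theta>..T} (\<lambda>s. norm (h0 (x s)))"
proof -
  have "continuous_on {-\<theta>..T} x" using assms(1) by (simp add: is_sol_def)
  then show ?thesis
    by (intro continuous_intros continuous_on_compose2[OF assms(2)]) auto
qed

lemma Y_bdd:
  assumes "is_sol f \<theta> \<xi> u T x" "continuous_on UNIV h0" "{p..q} \<subseteq> {-\<theta>..T}"
  shows "bdd_above ((\<lambda>s. norm (h0 (x s))) ` {p..q})"
proof -
  have "compact ((\<lambda>s. norm (h0 (x s))) ` {-\<theta>..T})"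
    by (intro compact_continuous_image Y_cont[OF assms(1,2)]) auto
  then have "bdd_above ((\<lambda>s. norm (h0 (x s))) ` {-\<theta>..T})"
    by (simp add: bounded_imp_bdd_above compact_imp_bounded)
  then show ?thesis by (rule bdd_above_mono) (rule image_mono[OF assms(3)])
qed

lemma Sup_Y_nonneg:
  assumes "is_sol f \<theta> \<xi> u T x" "continuous_on UNIV h0" "{p..q} \<subseteq> {-\<theta>..T}" "p \<le> q"
  shows "0 \<le> Sup ((\<lambda>s. norm (h0 (x s))) ` {p..q})"
proof -
  have "norm (h0 (x q)) \<le> Sup ((\<lambda>s. norm (h0 (x s))) ` {p..q})"
    using assms by (intro cSup_upper Y_bdd[OF assms(1-3)]) auto
  then show ?thesis using norm_ge_zero[of "h0 (x q)"] by linarith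
qed

lemma Sup_Y_mono:
  assumes "is_sol f \<theta> \<xi> u T x" "continuous_on UNIV h0" "{p'..q'} \<subseteq> {-\<theta>..T}" "p \<le> q"
    "{p..q} \<subseteq> {p'..q'}"
  shows "Sup ((\<lambda>s. norm (h0 (x s))) ` {p..q}) \<le> Sup ((\<lambda>s. norm (h0 (x s))) ` {p'..q'})"
  using assms by (intro cSup_subset_mono Y_bdd[OF assms(1-3)] image_mono) auto

lemma shift_apply:
  fixes B :: "(real \<Rightarrow> 'n::euclidean_space) \<Rightarrow> real \<Rightarrow> real"
  assumes \<theta>: "\<theta> > 0" and h0c: "continuous_on UNIV h0"
    and sol: "is_sol f \<theta> \<xi> u T x" and uM: "u \<in> Mspace" and ub: "ess_bounded u"
    and at: "0 \<le> a" "0 \<le> t" "a + t \<le> T"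
    and \<kappa>: "classN \<kappa>" and \<gamma>: "classN \<gamma>"
    and H: "\<forall>\<xi>\<in>Xspace \<theta>. \<forall>u\<in>Mspace. ess_bounded u \<longrightarrow> (\<forall>t\<ge>0. \<forall>x. is_sol f \<theta> \<xi> u t x \<longrightarrow>
           norm (h0 (x t)) \<le> max (B \<xi> t) (max (\<kappa> (ymax \<theta> h0 x t)) (\<gamma> (unorm u))))"
  shows "norm (h0 (x (a + t))) \<le> max (B (\<lambda>s. x (s + a)) t)
           (max (\<kappa> (Sup ((\<lambda>s. norm (h0 (x s))) ` {a - \<theta>..T}))) (\<gamma> (unorm u)))"
proof -
  have aT: "a \<le> T" using at by linarith
  have sol': "is_sol f \<theta> (\<lambda>s. x (s + a)) (\<lambda>s. u (s + a)) (T - a) (\<lambda>s. x (s + a))"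
    by (rule is_sol_shift[OF sol at(1) aT])
  then have sol'': "is_sol f \<theta> (\<lambda>s. x (s + a)) (\<lambda>s. u (s + a)) t (\<lambda>s. x (s + a))"
    by (rule is_sol_restrict) (use at in auto)
  have X: "(\<lambda>s. x (s + a)) \<in> Xspace \<theta>"
    using sol' at \<theta> unfolding is_sol_def Xspace_def by (auto intro: continuous_on_subset)
  have uM': "(\<lambda>s. u (s + a)) \<in> Mspace" by (rule Mspace_shift[OF uM at(1)])
  have ub': "ess_bounded (\<lambda>s. u (s + a))" and ule: "unorm (\<lambda>s. u (s + a)) \<le> unorm u"
    using ess_bounded_shift[OF ub at(1)] by auto
  from H X uM' ub' at(2) sol''
  have 1: "norm (h0 (x (t + a))) \<le> max (B (\<lambda>s. x (s + a)) t)
      (max (\<kappa> (ymax \<theta> h0 (\<lambda>s. x (s + a)) t)) (\<gamma> (unorm (\<lambda>s. u (s + a)))))"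
    by blast
  have ym: "ymax \<theta> h0 (\<lambda>s. x (s + a)) t = Sup ((\<lambda>s. norm (h0 (x s))) ` {a - \<theta>..a + t})"
    unfolding ymax_def using image_shift_Icc[of "\<lambda>s. norm (h0 (x s))" a "-\<theta>" t]
    by (simp add: add.commute)
  have ym_nn: "0 \<le> ymax \<theta> h0 (\<lambda>s. x (s + a)) t"
    unfolding ym by (rule Sup_Y_nonneg[OF sol h0c]) (use at \<theta> in auto)
  have "ymax \<theta> h0 (\<lambda>s. x (s + a)) t \<le> Sup ((\<lambda>s. norm (h0 (x s))) ` {a - \<theta>..T})"
    unfolding ym by (rule Sup_Y_mono[OF sol h0c]) (use at \<theta> in auto)
  then have k: "\<kappa> (ymax \<theta> h0 (\<lambda>s. x (s + a)) t) \<le> \<kappa> (Sup ((\<lambda>s. norm (h0 (x s))) ` {a - \<theta>..T}))"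
    using classN_mono[OF \<kappa> ym_nn] by blast
  have g: "\<gamma> (unorm (\<lambda>s. u (s + a))) \<le> \<gamma> (unorm u)"
    using classN_mono[OF \<gamma> unorm_nonneg[OF ub'] ule] .
  show ?thesis using 1 k g by (simp add: add.commute)
qed

lemma global_bound:
  fixes Y \<kappa> :: "real \<Rightarrow> real"
  assumes \<theta>: "\<theta> > 0" and T: "0 \<le> T"
    and Ynn: "\<forall>s\<in>{-\<theta>..T}. 0 \<le> Y s" and bdd: "bdd_above (Y ` {-\<theta>..T})"
    and \<kappa>: "classN \<kappa>" and \<kappa>lt: "\<forall>s>0. \<kappa> s < s"
    and init: "\<forall>s\<in>{-\<theta>..0}. Y s \<le> A"
    and later: "\<forall>s\<in>{0..T}. Y s \<le> max A (max (\<kappa> (Sup (Y ` {-\<theta>..T}))) g)"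
    and g: "0 \<le> g"
  shows "Sup (Y ` {-\<theta>..T}) \<le> max A g"
proof -
  define S where "S = Sup (Y ` {-\<theta>..T})"
  have "Y T \<le> S" unfolding S_def using T \<theta> by (intro cSup_upper bdd) auto
  moreover have "0 \<le> Y T" using Ynn T \<theta> by auto
  ultimately have S_nn: "0 \<le> S" by linarith
  have "S \<le> max A (max (\<kappa> S) g)"
    unfolding S_def
  proof (rule cSup_least)
    show "Y ` {-\<theta>..T} \<noteq> {}" using \<theta> T by auto
    fix y assume "y \<in> Y ` {-\<theta>..T}"
    then obtain s where s: "s \<in> {-\<theta>..T}" "y = Y s" by auto
    show "y \<le> max A (max (\<kappa> (Sup (Y ` {-\<theta>..T}))) g)"
    proof (cases "s \<le> 0")
      case True then show ?thesis using init s by force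
    next
      case False then show ?thesis using later s by force
    qed
  qed
  moreover have "\<kappa> S < S \<or> S = 0" using \<kappa>lt S_nn by force
  moreover have "\<kappa> 0 = 0" using \<kappa> by (simp add: classN_def)
  ultimately show ?thesis unfolding S_def[symmetric] using g by (cases "S = 0") (auto simp: max_def split: if_splits)
qed





lemma delta_exists:
  assumes \<kappa>: "classN \<kappa>" and \<kappa>lt: "\<forall>s>0. \<kappa> s < s" and \<epsilon>: "0 < \<epsilon>"
  shows "\<exists>\<delta>>0. \<forall>s. \<epsilon> < s \<longrightarrow> s \<le> C \<longrightarrow> \<kappa> s \<le> s - \<delta>"
proof (cases "C \<le> \<epsilon>")
  case True then show ?thesis by (intro exI[of _ 1]) auto
next
  case False
  have "continuous_on {\<epsilon>..C} (\<lambda>s. s - \<kappa> s)"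
    using \<kappa> \<epsilon> unfolding classN_def by (intro continuous_intros) (auto intro: continuous_on_subset)
  from continuous_attains_inf[OF compact_Icc _ this] False
  obtain s0 where s0: "s0 \<in> {\<epsilon>..C}" "\<forall>y\<in>{\<epsilon>..C}. s0 - \<kappa> s0 \<le> y - \<kappa> y" by auto
  have "\<kappa> s0 < s0" using \<kappa>lt s0(1) \<epsilon> by auto
  moreover have "\<forall>s. \<epsilon> < s \<longrightarrow> s \<le> C \<longrightarrow> \<kappa> s \<le> s - (s0 - \<kappa> s0)"
  proof (intro allI impI)
    fix s assume "\<epsilon> < s" "s \<le> C"
    then have "s0 - \<kappa> s0 \<le> s - \<kappa> s" using s0(2) by auto
    then show "\<kappa> s \<le> s - (s0 - \<kappa> s0)" by linarith
  qed
  ultimately show ?thesis by (intro exI[of _ "s0 - \<kappa> s0"]) auto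
qed

lemma K_exists:
  assumes "0 < \<delta>" "0 < \<epsilon>"
  shows "\<exists>K::nat. C - real K * \<delta> \<le> \<epsilon>"
proof -
  obtain K :: nat where "C / \<delta> < real K" using reals_Archimedean2 by blast
  then have "C < real K * \<delta>" using assms by (simp add: field_simps)
  then show ?thesis using assms by (intro exI[of _ K]) linarith
qed

lemma classN_add: "classN a \<Longrightarrow> classN b \<Longrightarrow> classN (\<lambda>s. a s + b s)"
  unfolding classN_def by (auto intro!: continuous_intros add_mono simp: mono_on_def)

lemma classK_add: "classK a \<Longrightarrow> classN b \<Longrightarrow> classK (\<lambda>s. a s + b s)"
  unfolding classK_def using classN_add[of a b]
  by (auto simp: strict_mono_on_def classN_def mono_on_def intro: add_less_le_mono)

lemma classK_N: "classK a \<Longrightarrow> classN a" by (simp add: classK_def)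

lemma KL_from_UAG:
  fixes P :: "'a \<Rightarrow> bool" and sz v tm out :: "'a \<Rightarrow> real"
  assumes \<sigma>0: "classK \<sigma>0" and \<gamma>: "classN \<gamma>"
    and nn: "\<forall>z. P z \<longrightarrow> 0 \<le> sz z \<and> 0 \<le> v z \<and> 0 \<le> tm z"
    and bound: "\<forall>z. P z \<longrightarrow> out z \<le> \<sigma>0 (sz z) + \<gamma> (v z)"
    and uag: "\<forall>r \<epsilon>. 0 \<le> r \<longrightarrow> 0 < \<epsilon> \<longrightarrow>
       (\<exists>T0. \<forall>z. P z \<longrightarrow> sz z \<le> r \<longrightarrow> v z \<le> r \<longrightarrow> T0 \<le> tm z \<longrightarrow> out z \<le> \<gamma> (v z) + \<epsilon>)"
  shows "\<exists>\<beta> \<gamma>'. classKL \<beta> \<and> classN \<gamma>' \<and> (\<forall>z. P z \<longrightarrow> out z \<le> \<beta> (sz z) (tm z) + \<gamma>' (v z))"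
proof -
  define W where "W r t = {out z - \<gamma> (v z) | z. P z \<and> sz z \<le> r \<and> v z \<le> r \<and> t \<le> tm z}" for r t
  define w where "w r t = Sup (insert 0 (W r t))" for r t
  have \<sigma>0m: "\<sigma>0 a \<le> \<sigma>0 b" if "0 \<le> a" "a \<le> b" for a b
    using classN_mono[OF classK_N[OF \<sigma>0] that] .
  have Wb: "\<forall>y\<in>insert 0 (W r t). y \<le> \<sigma>0 r" if r: "0 \<le> r" for r t
  proof
    fix y assume "y \<in> insert 0 (W r t)"
    then show "y \<le> \<sigma>0 r"
    proof
      assume "y = 0" then show ?thesis using \<sigma>0 r by (simp add: classK_def classN_def)
    next
      assume "y \<in> W r t"
      then obtain z where z: "P z" "sz z \<le> r" "y = out z - \<gamma> (v z)" unfolding W_def by blast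
      have "out z \<le> \<sigma>0 (sz z) + \<gamma> (v z)" using bound z by blast
      moreover have "\<sigma>0 (sz z) \<le> \<sigma>0 r" using \<sigma>0m nn z by blast
      ultimately show ?thesis using z by linarith
    qed
  qed
  have bdd: "bdd_above (insert 0 (W r t))" if "0 \<le> r" for r t
    using Wb[OF that] by (intro bdd_aboveI) blast
  have w_nn: "0 \<le> w r t" if "0 \<le> r" for r t
    unfolding w_def by (intro cSup_upper bdd that) auto
  have w_b: "w r t \<le> \<sigma>0 r" if "0 \<le> r" for r t
    unfolding w_def using Wb[OF that] by (intro cSup_least) auto
  have w_r: "w r t \<le> w r' t" if "0 \<le> r" "r \<le> r'" for r r' t
    unfolding w_def
    by (intro cSup_subset_mono bdd insert_mono) (use that in \<open>auto simp: W_def\<close>)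
  have w_t: "w r t' \<le> w r t" if "0 \<le> r" "t \<le> t'" for r t t'
    unfolding w_def
    by (intro cSup_subset_mono bdd insert_mono) (use that in \<open>auto simp: W_def\<close>)
  have w_lim: "((\<lambda>t. w r t) \<longlongrightarrow> 0) at_top" if r: "0 \<le> r" for r
  proof (rule order_tendstoI)
    fix a :: real assume "a < 0"
    then have "\<forall>t. a < w r t" using w_nn[OF r] by (meson less_le_trans)
    then show "\<forall>\<^sub>F t in at_top. a < w r t" by (rule always_eventually)
  next
    fix a :: real assume a: "0 < a"
    then obtain T0 where T0: "\<forall>z. P z \<longrightarrow> sz z \<le> r \<longrightarrow> v z \<le> r \<longrightarrow> T0 \<le> tm z \<longrightarrow> out z \<le> \<gamma> (v z) + a / 2"
      using uag r by (meson half_gt_zero)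
    have "w r t \<le> a / 2" if "T0 \<le> t" for t
      unfolding w_def
    proof (rule cSup_least)
      fix y assume "y \<in> insert 0 (W r t)"
      then show "y \<le> a / 2"
      proof
        assume "y \<in> W r t"
        then obtain z where "P z" "sz z \<le> r" "v z \<le> r" "t \<le> tm z" "y = out z - \<gamma> (v z)"
          unfolding W_def by blast
        then show ?thesis using T0 that by force
      qed (use a in auto)
    qed auto
    then have "\<forall>t. T0 \<le> t \<longrightarrow> w r t < a" using a by force
    then show "\<forall>\<^sub>F t in at_top. w r t < a"
      using eventually_at_top_linorder by blast
  qed
  obtain \<beta> where \<beta>: "classKL \<beta>" "\<forall>r\<ge>0. \<forall>t\<ge>0. w r t \<le> \<beta> r t"
    using KL_majorant[OF \<sigma>0, of w] w_nn w_b w_r w_t w_lim by blast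
  define \<gamma>' where "\<gamma>' s = \<sigma>0 s + \<gamma> s" for s
  have g': "classN \<gamma>'" unfolding \<gamma>'_def by (intro classN_add classK_N \<sigma>0 \<gamma>)
  have "out z \<le> \<beta> (sz z) (tm z) + \<gamma>' (v z)" if z: "P z" for z
  proof -
    have nz: "0 \<le> sz z" "0 \<le> v z" "0 \<le> tm z" using nn z by auto
    have \<beta>nn: "0 \<le> \<beta> (sz z) (tm z)"
      using \<beta>(1) nz unfolding classKL_def classK_def classN_def by auto
    have \<sigma>nn: "0 \<le> \<sigma>0 (v z)" using \<sigma>0 nz unfolding classK_def classN_def by auto
    have \<gamma>nn: "0 \<le> \<gamma> (v z)" using \<gamma> nz unfolding classN_def by auto
    show ?thesis
    proof (cases "v z \<le> sz z")
      case True
      then have "out z - \<gamma> (v z) \<in> W (sz z) (tm z)" unfolding W_def using z by blast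
      then have "out z - \<gamma> (v z) \<le> w (sz z) (tm z)"
        unfolding w_def by (intro cSup_upper bdd nz) auto
      then show ?thesis using \<beta>(2) nz \<sigma>nn unfolding \<gamma>'_def by fastforce
    next
      case False
      then have "\<sigma>0 (sz z) \<le> \<sigma>0 (v z)" using \<sigma>0m nz by auto
      then show ?thesis using bound z \<beta>nn unfolding \<gamma>'_def by fastforce
    qed
  qed
  then show ?thesis using \<beta>(1) g' by blast
qed





lemma KL_mono1: "classKL \<beta> \<Longrightarrow> 0 \<le> t \<Longrightarrow> 0 \<le> a \<Longrightarrow> a \<le> b \<Longrightarrow> \<beta> a t \<le> \<beta> b t"
  unfolding classKL_def by (metis classK_N classN_mono)

lemma KL_mono2: "classKL \<beta> \<Longrightarrow> 0 \<le> s \<Longrightarrow> 0 \<le> t \<Longrightarrow> t \<le> t' \<Longrightarrow> \<beta> s t' \<le> \<beta> s t"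
  unfolding classKL_def by (auto simp: monotone_on_def)

lemma KL_nn: "classKL \<beta> \<Longrightarrow> 0 \<le> s \<Longrightarrow> 0 \<le> t \<Longrightarrow> 0 \<le> \<beta> s t"
  unfolding classKL_def classK_def classN_def by auto

lemma KL_K0: "classKL \<beta> \<Longrightarrow> classK (\<lambda>s. \<beta> s 0)"
  unfolding classKL_def by auto

lemma KL_lim:
  assumes "classKL \<beta>" "0 \<le> s" "0 < \<epsilon>"
  shows "\<exists>\<tau>\<ge>0. \<beta> s \<tau> \<le> \<epsilon>"
proof -
  have "((\<lambda>t. \<beta> s t) \<longlongrightarrow> 0) at_top" using assms unfolding classKL_def by auto
  then have "eventually (\<lambda>t. \<beta> s t < \<epsilon>) at_top" using assms(3) by (rule order_tendstoD)
  then obtain T where "\<forall>t\<ge>T. \<beta> s t < \<epsilon>" by (auto simp: eventually_at_top_linorder)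
  then have "\<beta> s (max T 0) < \<epsilon>" by simp
  then show ?thesis by (intro exI[of _ "max T 0"]) auto
qed

lemma classK_id: "classK (\<lambda>s. s)"
  unfolding classK_def classN_def by (auto simp: strict_mono_on_def mono_on_def intro: continuous_intros)

lemma classN_comp: "classN a \<Longrightarrow> classN b \<Longrightarrow> classN (\<lambda>s. a (b s))"
  unfolding classN_def
  by (auto intro!: continuous_on_compose2[of "{0..}" a "{0..}" b] simp: mono_on_def)

lemma classN_nn: "classN a \<Longrightarrow> 0 \<le> s \<Longrightarrow> 0 \<le> a s"
  unfolding classN_def by auto

lemma sol_basic:
  assumes \<theta>: "\<theta> > 0" and h0c: "continuous_on UNIV h0"
    and \<xi>: "\<xi> \<in> Xspace \<theta>" and sol: "is_sol f \<theta> \<xi> u T x" and T: "0 \<le> T"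
  shows "\<forall>s\<in>{-\<theta>..0}. x s = \<xi> s"
    and "Hout \<theta> h0 x = Hout \<theta> h0 \<xi>" "hnorm \<theta> x = hnorm \<theta> \<xi>"
    and "0 \<le> Hout \<theta> h0 \<xi>" "0 \<le> hnorm \<theta> \<xi>"
    and "\<forall>s\<in>{-\<theta>..0}. norm (h0 (\<xi> s)) \<le> Hout \<theta> h0 \<xi>"
    and "\<forall>s\<in>{-\<theta>..0}. norm (\<xi> s) \<le> hnorm \<theta> \<xi>"
    and "\<forall>s\<in>{-\<theta>..T}. 0 \<le> norm (h0 (x s))"
    and "bdd_above ((\<lambda>s. norm (h0 (x s))) ` {-\<theta>..T})"
proof -
  show eq: "\<forall>s\<in>{-\<theta>..0}. x s = \<xi> s" using sol by (simp add: is_sol_def)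
  show "Hout \<theta> h0 x = Hout \<theta> h0 \<xi>" unfolding Hout_def hnorm_def using eq
    by (metis (no_types, lifting) image_cong)
  show "hnorm \<theta> x = hnorm \<theta> \<xi>" unfolding hnorm_def using eq
    by (metis (no_types, lifting) image_cong)
  have c: "continuous_on {-\<theta>..0} \<xi>" using \<xi> by (simp add: Xspace_def)
  have c2: "continuous_on {-\<theta>..0} (\<lambda>s. h0 (\<xi> s))"
    by (rule continuous_on_compose2[OF h0c c]) auto
  show "0 \<le> Hout \<theta> h0 \<xi>" unfolding Hout_def by (rule hnorm_nonneg[OF c2]) (use \<theta> in auto)
  show "0 \<le> hnorm \<theta> \<xi>" by (rule hnorm_nonneg[OF c]) (use \<theta> in auto)
  show "\<forall>s\<in>{-\<theta>..0}. norm (h0 (\<xi> s)) \<le> Hout \<theta> h0 \<xi>" unfolding Hout_def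
    using hnorm_upper[OF c2] by blast
  show "\<forall>s\<in>{-\<theta>..0}. norm (\<xi> s) \<le> hnorm \<theta> \<xi>"
    using hnorm_upper[OF c] by blast
  show "\<forall>s\<in>{-\<theta>..T}. 0 \<le> norm (h0 (x s))" by simp
  show "bdd_above ((\<lambda>s. norm (h0 (x s))) ` {-\<theta>..T})" by (rule Y_bdd[OF sol h0c]) auto
qed

lemma Hout_shift: "Hout \<theta> h0 (\<lambda>s. x (s + a)) = Sup ((\<lambda>s. norm (h0 (x s))) ` {a - \<theta>..a})"
  unfolding Hout_def hnorm_def using image_shift_Icc[of "\<lambda>s. norm (h0 (x s))" a "-\<theta>" 0]
  by (simp add: add.commute)

lemma hnorm_shift: "hnorm \<theta> (\<lambda>s. x (s + a)) = Sup ((\<lambda>s. norm (x s)) ` {a - \<theta>..a})"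
  unfolding hnorm_def using image_shift_Icc[of "\<lambda>s. norm (x s)" a "-\<theta>" 0]
  by (simp add: add.commute)





lemma IOS_template:
  fixes f :: "(real \<Rightarrow> 'n::euclidean_space) \<Rightarrow> 'm::euclidean_space \<Rightarrow> 'n"
    and h0 :: "'n \<Rightarrow> 'p::euclidean_space" and SZ :: "(real \<Rightarrow> 'n) \<Rightarrow> real"
  assumes \<sigma>0: "classK \<sigma>0" and \<gamma>: "classN \<gamma>"
    and nn: "\<And>\<xi>. \<xi> \<in> Xspace \<theta> \<Longrightarrow> 0 \<le> SZ \<xi>"
    and bound: "\<And>\<xi> u T x. \<xi> \<in> Xspace \<theta> \<Longrightarrow> u \<in> Mspace \<Longrightarrow> ess_bounded u \<Longrightarrow> 0 \<le> T \<Longrightarrow>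
        is_sol f \<theta> \<xi> u T x \<Longrightarrow> norm (h0 (x T)) \<le> \<sigma>0 (SZ \<xi>) + \<gamma> (unorm u)"
    and uag: "\<And>r \<epsilon>. 0 \<le> r \<Longrightarrow> 0 < \<epsilon> \<Longrightarrow> \<exists>T0. \<forall>\<xi> u T x. \<xi> \<in> Xspace \<theta> \<and> u \<in> Mspace \<and>
       ess_bounded u \<and> 0 \<le> T \<and> is_sol f \<theta> \<xi> u T x
     \<and> SZ \<xi> \<le> r \<and> unorm u \<le> r \<and> T0 \<le> T \<longrightarrow> norm (h0 (x T)) \<le> \<gamma> (unorm u) + \<epsilon>"
  shows "\<exists>\<beta>' \<gamma>'. classKL \<beta>' \<and> classN \<gamma>' \<and> (\<forall>\<xi>\<in>Xspace \<theta>. \<forall>u\<in>Mspace. ess_bounded u \<longrightarrow>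
     (\<forall>T\<ge>0. \<forall>x. is_sol f \<theta> \<xi> u T x \<longrightarrow> norm (h0 (x T)) \<le> \<beta>' (SZ \<xi>) T + \<gamma>' (unorm u)))"
proof -
  define P :: "(real \<Rightarrow> 'n) \<times> (real \<Rightarrow> 'm) \<times> real \<times> (real \<Rightarrow> 'n) \<Rightarrow> bool" where "P z \<longleftrightarrow> (case z of (\<xi>, u, T, x) \<Rightarrow>
     \<xi> \<in> Xspace \<theta> \<and> u \<in> Mspace \<and> ess_bounded u \<and> 0 \<le> T \<and> is_sol f \<theta> \<xi> u T x)" for z
  define sz :: "(real \<Rightarrow> 'n) \<times> (real \<Rightarrow> 'm) \<times> real \<times> (real \<Rightarrow> 'n) \<Rightarrow> real" where "sz z = (case z of (\<xi>, u, T, x) \<Rightarrow> SZ \<xi>)" for z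
  define v :: "(real \<Rightarrow> 'n) \<times> (real \<Rightarrow> 'm) \<times> real \<times> (real \<Rightarrow> 'n) \<Rightarrow> real" where "v z = (case z of (\<xi>, u, T, x) \<Rightarrow> unorm u)" for z
  define tm :: "(real \<Rightarrow> 'n) \<times> (real \<Rightarrow> 'm) \<times> real \<times> (real \<Rightarrow> 'n) \<Rightarrow> real" where "tm z = (case z of (\<xi>, u, T, x) \<Rightarrow> T)" for z
  define out :: "(real \<Rightarrow> 'n) \<times> (real \<Rightarrow> 'm) \<times> real \<times> (real \<Rightarrow> 'n) \<Rightarrow> real" where "out z = (case z of (\<xi>, u, T, x) \<Rightarrow> norm (h0 (x T)))" for z
  have nn': "\<forall>z. P z \<longrightarrow> 0 \<le> sz z \<and> 0 \<le> v z \<and> 0 \<le> tm z"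
  proof (intro allI impI)
    fix z :: "(real \<Rightarrow> 'n) \<times> (real \<Rightarrow> 'm) \<times> real \<times> (real \<Rightarrow> 'n)" assume Pz: "P z"
    obtain \<xi> u T x where z: "z = (\<xi>, u, T, x)" by (cases z) auto
    from Pz show "0 \<le> sz z \<and> 0 \<le> v z \<and> 0 \<le> tm z"
      unfolding z P_def sz_def v_def tm_def using nn unorm_nonneg by auto
  qed
  have bound': "\<forall>z. P z \<longrightarrow> out z \<le> \<sigma>0 (sz z) + \<gamma> (v z)"
  proof (intro allI impI)
    fix z :: "(real \<Rightarrow> 'n) \<times> (real \<Rightarrow> 'm) \<times> real \<times> (real \<Rightarrow> 'n)" assume Pz: "P z"
    obtain \<xi> u T x where z: "z = (\<xi>, u, T, x)" by (cases z) auto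
    from Pz show "out z \<le> \<sigma>0 (sz z) + \<gamma> (v z)"
      unfolding z P_def out_def sz_def v_def using bound by auto
  qed
  have uag': "\<forall>r \<epsilon>. 0 \<le> r \<longrightarrow> 0 < \<epsilon> \<longrightarrow>
       (\<exists>T0. \<forall>z. P z \<longrightarrow> sz z \<le> r \<longrightarrow> v z \<le> r \<longrightarrow> T0 \<le> tm z \<longrightarrow> out z \<le> \<gamma> (v z) + \<epsilon>)"
  proof (intro allI impI)
    fix r \<epsilon> :: real assume r: "0 \<le> r" and \<epsilon>: "0 < \<epsilon>"
    obtain T0 where T0: "\<forall>\<xi> u T x. \<xi> \<in> Xspace \<theta> \<and> u \<in> Mspace \<and> ess_bounded u \<and> 0 \<le> T \<and> is_sol f \<theta> \<xi> u T x
     \<and> SZ \<xi> \<le> r \<and> unorm u \<le> r \<and> T0 \<le> T \<longrightarrow> norm (h0 (x T)) \<le> \<gamma> (unorm u) + \<epsilon>"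
      using uag[OF r \<epsilon>] by blast
    show "\<exists>T0. \<forall>z. P z \<longrightarrow> sz z \<le> r \<longrightarrow> v z \<le> r \<longrightarrow> T0 \<le> tm z \<longrightarrow> out z \<le> \<gamma> (v z) + \<epsilon>"
    proof (intro exI[of _ T0] allI impI)
      fix z :: "(real \<Rightarrow> 'n) \<times> (real \<Rightarrow> 'm) \<times> real \<times> (real \<Rightarrow> 'n)"
      assume "P z" "sz z \<le> r" "v z \<le> r" "T0 \<le> tm z"
      moreover obtain \<xi> u T x where z: "z = (\<xi>, u, T, x)" by (cases z) auto
      ultimately show "out z \<le> \<gamma> (v z) + \<epsilon>" using T0 unfolding P_def sz_def v_def tm_def out_def by auto
    qed
  qed
  obtain \<beta>' \<gamma>' where R: "classKL \<beta>'" "classN \<gamma>'" "\<forall>z. P z \<longrightarrow> out z \<le> \<beta>' (sz z) (tm z) + \<gamma>' (v z)"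
    using KL_from_UAG[OF \<sigma>0 \<gamma> nn' bound' uag'] by blast
  have "\<forall>\<xi>\<in>Xspace \<theta>. \<forall>u\<in>Mspace. ess_bounded u \<longrightarrow> (\<forall>T\<ge>0. \<forall>x. is_sol f \<theta> \<xi> u T x \<longrightarrow>
          norm (h0 (x T)) \<le> \<beta>' (SZ \<xi>) T + \<gamma>' (unorm u))"
  proof (intro ballI allI impI)
    fix \<xi> u T x assume "\<xi> \<in> Xspace \<theta>" "u \<in> Mspace" "ess_bounded u" "0 \<le> T" "is_sol f \<theta> \<xi> u T x"
    then have "P (\<xi>, u, T, x)" unfolding P_def by auto
    then show "norm (h0 (x T)) \<le> \<beta>' (SZ \<xi>) T + \<gamma>' (unorm u)"
      using R(3) unfolding out_def sz_def tm_def v_def by fastforce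
  qed
  then show ?thesis using R(1,2) by blast
qed

lemma shifted_hnorm:
  fixes x :: "real \<Rightarrow> 'n::euclidean_space"
  assumes \<theta>: "\<theta> > 0" and \<xi>: "\<xi> \<in> Xspace \<theta>" and sol: "is_sol f \<theta> \<xi> u T x"
    and a: "0 \<le> a" "a \<le> T"
    and st: "\<forall>s\<in>{0..T}. norm (x s) \<le> M" and M: "hnorm \<theta> \<xi> \<le> M"
  shows "hnorm \<theta> (\<lambda>s. x (s + a)) \<le> M" "0 \<le> hnorm \<theta> (\<lambda>s. x (s + a))"
proof -
  have T: "0 \<le> T" using a by simp
  note sb = sol_basic[OF \<theta> continuous_on_id \<xi> sol T]
  show "hnorm \<theta> (\<lambda>s. x (s + a)) \<le> M"
  proof (rule hnorm_le)
    show "0 \<le> \<theta>" using \<theta> by simp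
    show "\<forall>s\<in>{-\<theta>..0}. norm (x (s + a)) \<le> M"
    proof
      fix s assume s: "s \<in> {-\<theta>..0}"
      show "norm (x (s + a)) \<le> M"
      proof (cases "s + a \<le> 0")
        case True
        then have "s + a \<in> {-\<theta>..0}" using s a by auto
        then show ?thesis using sb(1) sb(7) M by force
      next
        case False then show ?thesis using st s a by auto
      qed
    qed
  qed
  have "is_sol f \<theta> (\<lambda>s. x (s + a)) (\<lambda>s. u (s + a)) (T - a) (\<lambda>s. x (s + a))"
    by (rule is_sol_shift[OF sol a])
  then have "continuous_on {-\<theta>..0} (\<lambda>s. x (s + a))"
    unfolding is_sol_def using a by (auto intro: continuous_on_subset)
  then show "0 \<le> hnorm \<theta> (\<lambda>s. x (s + a))" by (rule hnorm_nonneg) (use \<theta> in auto)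
qed





locale P1 =
  fixes f :: "(real \<Rightarrow> 'n::euclidean_space) \<Rightarrow> 'm::euclidean_space \<Rightarrow> 'n"
    and h0 :: "'n \<Rightarrow> 'p::euclidean_space" and \<theta> :: real
    and \<beta> \<kappa> \<gamma> \<pi> \<sigma> \<mu>
  assumes \<theta>: "\<theta> > 0" and h0c: "continuous_on UNIV h0"
    and \<beta>: "classKL \<beta>" and \<kappa>: "classN \<kappa>" and \<gamma>: "classN \<gamma>" and \<kappa>lt: "\<forall>s>0. \<kappa> s < s"
    and \<pi>: "classN \<pi>" and h0b: "\<forall>v. norm (h0 v) \<le> \<pi> (norm v)"
    and \<sigma>: "classN \<sigma>" and \<mu>: "classN \<mu>"
    and GSb: "\<forall>\<xi>\<in>Xspace \<theta>. \<forall>u\<in>Mspace. ess_bounded u \<longrightarrow> (\<forall>T\<ge>0. \<forall>x. is_sol f \<theta> \<xi> u T x \<longrightarrow>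
          norm (x T) \<le> \<sigma> (hnorm \<theta> \<xi>) + \<mu> (unorm u))"
    and Hyp: "\<forall>\<xi>\<in>Xspace \<theta>. \<forall>u\<in>Mspace. ess_bounded u \<longrightarrow> (\<forall>t\<ge>0. \<forall>x. is_sol f \<theta> \<xi> u t x \<longrightarrow>
           norm (h0 (x t)) \<le> max (\<beta> (hnorm \<theta> \<xi>) t) (max (\<kappa> (ymax \<theta> h0 x t)) (\<gamma> (unorm u))))"
begin

lemma glob:
  assumes \<xi>: "\<xi> \<in> Xspace \<theta>" and uM: "u \<in> Mspace" and ub: "ess_bounded u"
    and T: "0 \<le> T" and sol: "is_sol f \<theta> \<xi> u T x"
  shows "Sup ((\<lambda>s. norm (h0 (x s))) ` {-\<theta>..T}) \<le>
           max (max (\<pi> (hnorm \<theta> \<xi>)) (\<beta> (hnorm \<theta> \<xi>) 0)) (\<gamma> (unorm u))"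
proof -
  note sb = sol_basic[OF \<theta> h0c \<xi> sol T]
  have sh: "norm (h0 (x (0 + s))) \<le> max (\<beta> (hnorm \<theta> (\<lambda>s. x (s + 0))) s)
           (max (\<kappa> (Sup ((\<lambda>s. norm (h0 (x s))) ` {0 - \<theta>..T}))) (\<gamma> (unorm u)))"
    if "s \<in> {0..T}" for s
    by (rule shift_apply[OF \<theta> h0c sol uM ub _ _ _ \<kappa> \<gamma>, where B="\<lambda>\<xi> t. \<beta> (hnorm \<theta> \<xi>) t"])
       (use that Hyp in auto)
  show ?thesis
  proof (rule global_bound[OF \<theta> T sb(8) sb(9) \<kappa> \<kappa>lt])
    show "\<forall>s\<in>{-\<theta>..0}. norm (h0 (x s)) \<le> max (\<pi> (hnorm \<theta> \<xi>)) (\<beta> (hnorm \<theta> \<xi>) 0)"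
    proof
      fix s assume s: "s \<in> {-\<theta>..0}"
      have "norm (h0 (\<xi> s)) \<le> \<pi> (norm (\<xi> s))" using h0b by blast
      also have "\<dots> \<le> \<pi> (hnorm \<theta> \<xi>)" using classN_mono[OF \<pi> norm_ge_zero] sb(7) s by blast
      finally show "norm (h0 (x s)) \<le> max (\<pi> (hnorm \<theta> \<xi>)) (\<beta> (hnorm \<theta> \<xi>) 0)"
        using sb(1) s by simp
    qed
    show "0 \<le> \<gamma> (unorm u)" by (rule classN_nn[OF \<gamma> unorm_nonneg[OF ub]])
    show "\<forall>s\<in>{0..T}. norm (h0 (x s)) \<le> max (max (\<pi> (hnorm \<theta> \<xi>)) (\<beta> (hnorm \<theta> \<xi>) 0))
            (max (\<kappa> (Sup ((\<lambda>s. norm (h0 (x s))) ` {-\<theta>..T}))) (\<gamma> (unorm u)))"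
    proof
      fix s assume s: "s \<in> {0..T}"
      have "\<beta> (hnorm \<theta> \<xi>) s \<le> \<beta> (hnorm \<theta> \<xi>) 0" using KL_mono2[OF \<beta> sb(5)] s by auto
      then show "norm (h0 (x s)) \<le> max (max (\<pi> (hnorm \<theta> \<xi>)) (\<beta> (hnorm \<theta> \<xi>) 0))
            (max (\<kappa> (Sup ((\<lambda>s. norm (h0 (x s))) ` {-\<theta>..T}))) (\<gamma> (unorm u)))"
        using sh[OF s] sb(3) by simp
    qed
  qed
qed

lemma uag:
  assumes r: "0 \<le> r" and \<epsilon>: "0 < \<epsilon>"
  shows "\<exists>T0. \<forall>\<xi> u T x. \<xi> \<in> Xspace \<theta> \<and> u \<in> Mspace \<and> ess_bounded u \<and> 0 \<le> T \<and> is_sol f \<theta> \<xi> u T x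
     \<and> hnorm \<theta> \<xi> \<le> r \<and> unorm u \<le> r \<and> T0 \<le> T \<longrightarrow> norm (h0 (x T)) \<le> \<gamma> (unorm u) + \<epsilon>"
proof -
  define C where "C = \<pi> r + \<beta> r 0 + \<gamma> r"
  define D where "D = r + \<sigma> r + \<mu> r"
  have \<beta>r: "0 \<le> \<beta> r 0" by (rule KL_nn[OF \<beta> r]) simp
  have \<gamma>r: "0 \<le> \<gamma> r" by (rule classN_nn[OF \<gamma> r])
  have \<pi>r: "0 \<le> \<pi> r" by (rule classN_nn[OF \<pi> r])
  have D: "0 \<le> D" unfolding D_def using r classN_nn[OF \<sigma> r] classN_nn[OF \<mu> r] by simp
  have C: "0 \<le> C" unfolding C_def using \<pi>r \<beta>r \<gamma>r by simp
  obtain \<tau> where \<tau>: "0 \<le> \<tau>" "\<beta> D \<tau> \<le> \<epsilon>" using KL_lim[OF \<beta> D \<epsilon>] by blast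
  obtain \<delta> where \<delta>: "0 < \<delta>" "\<forall>s. \<epsilon> < s \<longrightarrow> s \<le> C \<longrightarrow> \<kappa> s \<le> s - \<delta>"
    using delta_exists[OF \<kappa> \<kappa>lt \<epsilon>] by blast
  obtain K :: nat where K: "C - real K * \<delta> \<le> \<epsilon>" using K_exists[OF \<delta>(1) \<epsilon>] by blast
  show ?thesis
  proof (intro exI[of _ "real K * (\<tau> + \<theta>)"] allI impI, elim conjE)
    fix \<xi> u T x
    assume \<xi>: "\<xi> \<in> Xspace \<theta>" and uM: "u \<in> Mspace" and ub: "ess_bounded u" and T: "0 \<le> T"
      and sol: "is_sol f \<theta> \<xi> u T x" and Hr: "hnorm \<theta> \<xi> \<le> r" and vr: "unorm u \<le> r"
      and T0: "real K * (\<tau> + \<theta>) \<le> T"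
    note sb = sol_basic[OF \<theta> h0c \<xi> sol T]
    define Y where "Y s = norm (h0 (x s))" for s
    define g where "g = \<gamma> (unorm u)"
    have g: "0 \<le> g" unfolding g_def by (rule classN_nn[OF \<gamma> unorm_nonneg[OF ub]])
    have gr: "g \<le> \<gamma> r" unfolding g_def by (rule classN_mono[OF \<gamma> unorm_nonneg[OF ub] vr])
    have Gb: "Sup (Y ` {-\<theta>..T}) \<le> max (max (\<pi> (hnorm \<theta> \<xi>)) (\<beta> (hnorm \<theta> \<xi>) 0)) g"
      unfolding Y_def g_def by (rule glob[OF \<xi> uM ub T sol])
    have "\<beta> (hnorm \<theta> \<xi>) 0 \<le> \<beta> r 0" by (rule KL_mono1[OF \<beta> _ sb(5) Hr]) simp
    moreover have "\<pi> (hnorm \<theta> \<xi>) \<le> \<pi> r" by (rule classN_mono[OF \<pi> sb(5) Hr])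
    ultimately have mC: "max (max (\<pi> (hnorm \<theta> \<xi>)) (\<beta> (hnorm \<theta> \<xi>) 0)) g \<le> C"
      unfolding C_def using gr \<pi>r \<beta>r \<gamma>r by auto
    have bdd: "bdd_above (Y ` {-\<theta>..T})" unfolding Y_def by (rule sb(9))
    have S0: "\<forall>s\<in>{-\<theta>..T}. Y s \<le> max C g"
    proof
      fix s assume "s \<in> {-\<theta>..T}"
      then have "Y s \<le> Sup (Y ` {-\<theta>..T})" by (intro cSup_upper bdd) auto
      then show "Y s \<le> max C g" using Gb mC by linarith
    qed
    have st: "\<forall>s\<in>{0..T}. norm (x s) \<le> D"
    proof
      fix s assume s: "s \<in> {0..T}"
      have "is_sol f \<theta> \<xi> u s x" by (rule is_sol_restrict[OF sol]) (use s in auto)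
      then have "norm (x s) \<le> \<sigma> (hnorm \<theta> \<xi>) + \<mu> (unorm u)" using GSb \<xi> uM ub s by auto
      moreover have "\<sigma> (hnorm \<theta> \<xi>) \<le> \<sigma> r" by (rule classN_mono[OF \<sigma> sb(5) Hr])
      moreover have "\<mu> (unorm u) \<le> \<mu> r" by (rule classN_mono[OF \<mu> unorm_nonneg[OF ub] vr])
      ultimately show "norm (x s) \<le> D" unfolding D_def using r by linarith
    qed
    have MD: "hnorm \<theta> \<xi> \<le> D" unfolding D_def using Hr classN_nn[OF \<sigma> r] classN_nn[OF \<mu> r] by linarith
    have step: "\<forall>a t. 0 \<le> a \<longrightarrow> \<tau> \<le> t \<longrightarrow> a + t \<le> T \<longrightarrow>
                  Y (a + t) \<le> max \<epsilon> (max (\<kappa> (Sup (Y ` {a - \<theta>..T}))) g)"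
    proof (intro allI impI)
      fix a t assume a: "0 \<le> a" "\<tau> \<le> t" "a + t \<le> T"
      have sa: "Y (a + t) \<le> max (\<beta> (hnorm \<theta> (\<lambda>s. x (s + a))) t)
           (max (\<kappa> (Sup (Y ` {a - \<theta>..T}))) g)"
        unfolding Y_def g_def
        by (rule shift_apply[OF \<theta> h0c sol uM ub _ _ _ \<kappa> \<gamma>, where B="\<lambda>\<xi> t. \<beta> (hnorm \<theta> \<xi>) t"])
           (use a \<tau> Hyp in auto)
      have aT: "a \<le> T" using a \<tau> by linarith
      note hs = shifted_hnorm[OF \<theta> \<xi> sol a(1) aT st MD]
      have "\<beta> (hnorm \<theta> (\<lambda>s. x (s + a))) t \<le> \<beta> D t"
        by (rule KL_mono1[OF \<beta> _ hs(2) hs(1)]) (use a \<tau> in auto)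
      also have "\<dots> \<le> \<beta> D \<tau>" by (rule KL_mono2[OF \<beta> D \<tau>(1) a(2)])
      finally have "\<beta> (hnorm \<theta> (\<lambda>s. x (s + a))) t \<le> \<epsilon>" using \<tau>(2) by linarith
      then show "Y (a + t) \<le> max \<epsilon> (max (\<kappa> (Sup (Y ` {a - \<theta>..T}))) g)" using sa by linarith
    qed
    have "\<forall>s. real K * (\<tau> + \<theta>) \<le> s \<longrightarrow> s \<le> T \<longrightarrow> Y s \<le> max \<epsilon> g"
      by (rule iterate_bound[OF \<theta> _ bdd \<kappa> \<kappa>lt \<epsilon> g \<tau>(1) \<delta>(1) \<delta>(2) S0 step K])
         (simp add: Y_def)
    then have "Y T \<le> max \<epsilon> g" using T0 by blast
    then show "norm (h0 (x T)) \<le> \<gamma> (unorm u) + \<epsilon>" unfolding Y_def g_def[symmetric] using g \<epsilon> by linarith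
  qed
qed

lemma IOS:
  assumes FC: "forward_complete f \<theta>"
  shows "IOS f \<theta> h0"
proof -
  have \<sigma>0: "classK (\<lambda>r. (r + \<pi> r) + \<beta> r 0)"
    by (rule classK_add[OF classK_add[OF classK_id \<pi>] classK_N[OF KL_K0[OF \<beta>]]])
  have "\<exists>\<beta>' \<gamma>'. classKL \<beta>' \<and> classN \<gamma>' \<and> (\<forall>\<xi>\<in>Xspace \<theta>. \<forall>u\<in>Mspace. ess_bounded u \<longrightarrow>
     (\<forall>T\<ge>0. \<forall>x. is_sol f \<theta> \<xi> u T x \<longrightarrow> norm (h0 (x T)) \<le> \<beta>' (hnorm \<theta> \<xi>) T + \<gamma>' (unorm u)))"
  proof (rule IOS_template[OF \<sigma>0 \<gamma>])
    fix \<xi> assume "\<xi> \<in> Xspace \<theta>"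
    then show "0 \<le> hnorm \<theta> \<xi>" unfolding Xspace_def by (intro hnorm_nonneg) (use \<theta> in auto)
  next
    fix \<xi> u T x
    assume \<xi>: "\<xi> \<in> Xspace \<theta>" and uM: "u \<in> Mspace" and ub: "ess_bounded u" and T: "0 \<le> T"
      and sol: "is_sol f \<theta> \<xi> u T x"
    note sb = sol_basic[OF \<theta> h0c \<xi> sol T]
    have "norm (h0 (x T)) \<le> Sup ((\<lambda>s. norm (h0 (x s))) ` {-\<theta>..T})"
      by (intro cSup_upper sb(9)) (use T \<theta> in auto)
    also have "\<dots> \<le> max (max (\<pi> (hnorm \<theta> \<xi>)) (\<beta> (hnorm \<theta> \<xi>) 0)) (\<gamma> (unorm u))"
      by (rule glob[OF \<xi> uM ub T sol])
    also have "\<dots> \<le> (hnorm \<theta> \<xi> + \<pi> (hnorm \<theta> \<xi>)) + \<beta> (hnorm \<theta> \<xi>) 0 + \<gamma> (unorm u)"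
      using sb(5) KL_nn[OF \<beta> sb(5), of 0] classN_nn[OF \<gamma> unorm_nonneg[OF ub]]
        classN_nn[OF \<pi> sb(5)] by auto
    finally show "norm (h0 (x T)) \<le> (hnorm \<theta> \<xi> + \<pi> (hnorm \<theta> \<xi>)) + \<beta> (hnorm \<theta> \<xi>) 0 + \<gamma> (unorm u)" .
  next
    fix r \<epsilon> :: real assume "0 \<le> r" "0 < \<epsilon>"
    then show "\<exists>T0. \<forall>\<xi> u T x. \<xi> \<in> Xspace \<theta> \<and> u \<in> Mspace \<and> ess_bounded u \<and> 0 \<le> T \<and> is_sol f \<theta> \<xi> u T x
     \<and> hnorm \<theta> \<xi> \<le> r \<and> unorm u \<le> r \<and> T0 \<le> T \<longrightarrow> norm (h0 (x T)) \<le> \<gamma> (unorm u) + \<epsilon>"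
      by (rule uag)
  qed
  then show ?thesis unfolding IOS_def using FC by blast
qed

end





locale P2 =
  fixes f :: "(real \<Rightarrow> 'n::euclidean_space) \<Rightarrow> 'm::euclidean_space \<Rightarrow> 'n"
    and h0 :: "'n \<Rightarrow> 'p::euclidean_space" and \<theta> :: real
    and \<beta> \<rho> \<kappa> \<gamma> \<pi> \<sigma> \<mu> and c :: real
  assumes \<theta>: "\<theta> > 0" and h0c: "continuous_on UNIV h0"
    and \<beta>: "classKL \<beta>" and \<rho>: "classN \<rho>" and \<kappa>: "classN \<kappa>" and \<gamma>: "classN \<gamma>" and \<kappa>lt: "\<forall>s>0. \<kappa> s < s"
    and \<pi>: "classN \<pi>" and h0b: "\<forall>v. norm (h0 v) \<le> \<pi> (norm v)"
    and \<sigma>: "classN \<sigma>" and \<mu>: "classN \<mu>" and c: "c > 0"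
    and UBb: "\<forall>\<xi>\<in>Xspace \<theta>. \<forall>u\<in>Mspace. ess_bounded u \<longrightarrow> (\<forall>T\<ge>0. \<forall>x. is_sol f \<theta> \<xi> u T x \<longrightarrow>
          norm (x T) \<le> \<sigma> (hnorm \<theta> \<xi>) + \<mu> (unorm u) + c)"
    and Hyp: "\<forall>\<xi>\<in>Xspace \<theta>. \<forall>u\<in>Mspace. ess_bounded u \<longrightarrow> (\<forall>t\<ge>0. \<forall>x. is_sol f \<theta> \<xi> u t x \<longrightarrow>
           norm (h0 (x t)) \<le> max (\<beta> (Hout \<theta> h0 \<xi>) (t / (1 + \<rho> (hnorm \<theta> \<xi>))))
                                  (max (\<kappa> (ymax \<theta> h0 x t)) (\<gamma> (unorm u))))"
begin

lemma Hout_le: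
  assumes \<xi>: "\<xi> \<in> Xspace \<theta>" and T: "0 \<le> T" and sol: "is_sol f \<theta> \<xi> u T x"
  shows "Hout \<theta> h0 \<xi> \<le> \<pi> (hnorm \<theta> \<xi>)"
proof -
  note sb = sol_basic[OF \<theta> h0c \<xi> sol T]
  show ?thesis unfolding Hout_def
  proof (rule hnorm_le)
    show "0 \<le> \<theta>" using \<theta> by simp
    show "\<forall>s\<in>{-\<theta>..0}. norm (h0 (\<xi> s)) \<le> \<pi> (hnorm \<theta> \<xi>)"
    proof
      fix s assume s: "s \<in> {-\<theta>..0}"
      have "norm (h0 (\<xi> s)) \<le> \<pi> (norm (\<xi> s))" using h0b by blast
      also have "\<dots> \<le> \<pi> (hnorm \<theta> \<xi>)" using classN_mono[OF \<pi> norm_ge_zero] sb(7) s by blast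
      finally show "norm (h0 (\<xi> s)) \<le> \<pi> (hnorm \<theta> \<xi>)" .
    qed
  qed
qed

lemma glob:
  assumes \<xi>: "\<xi> \<in> Xspace \<theta>" and uM: "u \<in> Mspace" and ub: "ess_bounded u"
    and T: "0 \<le> T" and sol: "is_sol f \<theta> \<xi> u T x"
  shows "Sup ((\<lambda>s. norm (h0 (x s))) ` {-\<theta>..T}) \<le>
           max (max (Hout \<theta> h0 \<xi>) (\<beta> (Hout \<theta> h0 \<xi>) 0)) (\<gamma> (unorm u))"
proof -
  note sb = sol_basic[OF \<theta> h0c \<xi> sol T]
  have sh: "norm (h0 (x (0 + s))) \<le> max (\<beta> (Hout \<theta> h0 (\<lambda>s. x (s + 0))) (s / (1 + \<rho> (hnorm \<theta> (\<lambda>s. x (s + 0))))))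
           (max (\<kappa> (Sup ((\<lambda>s. norm (h0 (x s))) ` {0 - \<theta>..T}))) (\<gamma> (unorm u)))"
    if "s \<in> {0..T}" for s
    by (rule shift_apply[OF \<theta> h0c sol uM ub _ _ _ \<kappa> \<gamma>,
          where B="\<lambda>\<xi> t. \<beta> (Hout \<theta> h0 \<xi>) (t / (1 + \<rho> (hnorm \<theta> \<xi>)))"])
       (use that Hyp in auto)
  show ?thesis
  proof (rule global_bound[OF \<theta> T sb(8) sb(9) \<kappa> \<kappa>lt])
    show "\<forall>s\<in>{-\<theta>..0}. norm (h0 (x s)) \<le> max (Hout \<theta> h0 \<xi>) (\<beta> (Hout \<theta> h0 \<xi>) 0)"
      using sb(1) sb(6) by auto
    show "0 \<le> \<gamma> (unorm u)" by (rule classN_nn[OF \<gamma> unorm_nonneg[OF ub]])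
    show "\<forall>s\<in>{0..T}. norm (h0 (x s)) \<le> max (max (Hout \<theta> h0 \<xi>) (\<beta> (Hout \<theta> h0 \<xi>) 0))
            (max (\<kappa> (Sup ((\<lambda>s. norm (h0 (x s))) ` {-\<theta>..T}))) (\<gamma> (unorm u)))"
    proof
      fix s assume s: "s \<in> {0..T}"
      have "0 \<le> \<rho> (hnorm \<theta> \<xi>)" by (rule classN_nn[OF \<rho> sb(5)])
      then have "0 \<le> s / (1 + \<rho> (hnorm \<theta> \<xi>))" using s by simp
      then have "\<beta> (Hout \<theta> h0 \<xi>) (s / (1 + \<rho> (hnorm \<theta> \<xi>))) \<le> \<beta> (Hout \<theta> h0 \<xi>) 0"
        using KL_mono2[OF \<beta> sb(4)] by auto
      then show "norm (h0 (x s)) \<le> max (max (Hout \<theta> h0 \<xi>) (\<beta> (Hout \<theta> h0 \<xi>) 0))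
            (max (\<kappa> (Sup ((\<lambda>s. norm (h0 (x s))) ` {-\<theta>..T}))) (\<gamma> (unorm u)))"
        using sh[OF s] sb(2) sb(3) by simp
    qed
  qed
qed

lemma uag:
  assumes r: "0 \<le> r" and \<epsilon>: "0 < \<epsilon>"
  shows "\<exists>T0. \<forall>\<xi> u T x. \<xi> \<in> Xspace \<theta> \<and> u \<in> Mspace \<and> ess_bounded u \<and> 0 \<le> T \<and> is_sol f \<theta> \<xi> u T x
     \<and> hnorm \<theta> \<xi> \<le> r \<and> unorm u \<le> r \<and> T0 \<le> T \<longrightarrow> norm (h0 (x T)) \<le> \<gamma> (unorm u) + \<epsilon>"
proof -
  define C where "C = \<pi> r + \<beta> (\<pi> r) 0 + \<gamma> r"
  define D where "D = r + \<sigma> r + \<mu> r + c"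
  have \<pi>r: "0 \<le> \<pi> r" by (rule classN_nn[OF \<pi> r])
  have \<beta>r: "0 \<le> \<beta> (\<pi> r) 0" by (rule KL_nn[OF \<beta> \<pi>r]) simp
  have \<gamma>r: "0 \<le> \<gamma> r" by (rule classN_nn[OF \<gamma> r])
  have D: "0 \<le> D" unfolding D_def using r classN_nn[OF \<sigma> r] classN_nn[OF \<mu> r] c by simp
  have C: "0 \<le> C" unfolding C_def using \<pi>r \<beta>r \<gamma>r by simp
  have \<rho>D: "0 \<le> \<rho> D" by (rule classN_nn[OF \<rho> D])
  obtain \<tau>' where \<tau>': "0 \<le> \<tau>'" "\<beta> C \<tau>' \<le> \<epsilon>" using KL_lim[OF \<beta> C \<epsilon>] by blast
  define \<tau> where "\<tau> = \<tau>' * (1 + \<rho> D)"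
  have \<tau>: "0 \<le> \<tau>" unfolding \<tau>_def using \<tau>' \<rho>D by simp
  obtain \<delta> where \<delta>: "0 < \<delta>" "\<forall>s. \<epsilon> < s \<longrightarrow> s \<le> C \<longrightarrow> \<kappa> s \<le> s - \<delta>"
    using delta_exists[OF \<kappa> \<kappa>lt \<epsilon>] by blast
  obtain K :: nat where K: "C - real K * \<delta> \<le> \<epsilon>" using K_exists[OF \<delta>(1) \<epsilon>] by blast
  show ?thesis
  proof (intro exI[of _ "real K * (\<tau> + \<theta>)"] allI impI, elim conjE)
    fix \<xi> u T x
    assume \<xi>: "\<xi> \<in> Xspace \<theta>" and uM: "u \<in> Mspace" and ub: "ess_bounded u" and T: "0 \<le> T"
      and sol: "is_sol f \<theta> \<xi> u T x" and Hr: "hnorm \<theta> \<xi> \<le> r" and vr: "unorm u \<le> r"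
      and T0: "real K * (\<tau> + \<theta>) \<le> T"
    note sb = sol_basic[OF \<theta> h0c \<xi> sol T]
    define Y where "Y s = norm (h0 (x s))" for s
    define g where "g = \<gamma> (unorm u)"
    have g: "0 \<le> g" unfolding g_def by (rule classN_nn[OF \<gamma> unorm_nonneg[OF ub]])
    have gr: "g \<le> \<gamma> r" unfolding g_def by (rule classN_mono[OF \<gamma> unorm_nonneg[OF ub] vr])
    have Gb: "Sup (Y ` {-\<theta>..T}) \<le> max (max (Hout \<theta> h0 \<xi>) (\<beta> (Hout \<theta> h0 \<xi>) 0)) g"
      unfolding Y_def g_def by (rule glob[OF \<xi> uM ub T sol])
    have Hpr: "Hout \<theta> h0 \<xi> \<le> \<pi> r"
      using Hout_le[OF \<xi> T sol] classN_mono[OF \<pi> sb(5) Hr] by linarith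
    have "\<beta> (Hout \<theta> h0 \<xi>) 0 \<le> \<beta> (\<pi> r) 0" by (rule KL_mono1[OF \<beta> _ sb(4) Hpr]) simp
    then have mC: "max (max (Hout \<theta> h0 \<xi>) (\<beta> (Hout \<theta> h0 \<xi>) 0)) g \<le> C"
      unfolding C_def using gr \<pi>r \<beta>r \<gamma>r Hpr by auto
    have bdd: "bdd_above (Y ` {-\<theta>..T})" unfolding Y_def by (rule sb(9))
    have S0: "\<forall>s\<in>{-\<theta>..T}. Y s \<le> max C g"
    proof
      fix s assume "s \<in> {-\<theta>..T}"
      then have "Y s \<le> Sup (Y ` {-\<theta>..T})" by (intro cSup_upper bdd) auto
      then show "Y s \<le> max C g" using Gb mC by linarith
    qed
    have st: "\<forall>s\<in>{0..T}. norm (x s) \<le> D"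
    proof
      fix s assume s: "s \<in> {0..T}"
      have "is_sol f \<theta> \<xi> u s x" by (rule is_sol_restrict[OF sol]) (use s in auto)
      then have "norm (x s) \<le> \<sigma> (hnorm \<theta> \<xi>) + \<mu> (unorm u) + c" using UBb \<xi> uM ub s by auto
      moreover have "\<sigma> (hnorm \<theta> \<xi>) \<le> \<sigma> r" by (rule classN_mono[OF \<sigma> sb(5) Hr])
      moreover have "\<mu> (unorm u) \<le> \<mu> r" by (rule classN_mono[OF \<mu> unorm_nonneg[OF ub] vr])
      ultimately show "norm (x s) \<le> D" unfolding D_def using r by linarith
    qed
    have MD: "hnorm \<theta> \<xi> \<le> D" unfolding D_def using Hr classN_nn[OF \<sigma> r] classN_nn[OF \<mu> r] c by linarith
    have step: "\<forall>a t. 0 \<le> a \<longrightarrow> \<tau> \<le> t \<longrightarrow> a + t \<le> T \<longrightarrow>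
                  Y (a + t) \<le> max \<epsilon> (max (\<kappa> (Sup (Y ` {a - \<theta>..T}))) g)"
    proof (intro allI impI)
      fix a t assume a: "0 \<le> a" "\<tau> \<le> t" "a + t \<le> T"
      have sa: "Y (a + t) \<le> max (\<beta> (Hout \<theta> h0 (\<lambda>s. x (s + a))) (t / (1 + \<rho> (hnorm \<theta> (\<lambda>s. x (s + a))))))
           (max (\<kappa> (Sup (Y ` {a - \<theta>..T}))) g)"
        unfolding Y_def g_def
        by (rule shift_apply[OF \<theta> h0c sol uM ub _ _ _ \<kappa> \<gamma>,
              where B="\<lambda>\<xi> t. \<beta> (Hout \<theta> h0 \<xi>) (t / (1 + \<rho> (hnorm \<theta> \<xi>)))"])
           (use a \<tau> Hyp in auto)
      have aT: "a \<le> T" using a \<tau> by linarith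
      note hs = shifted_hnorm[OF \<theta> \<xi> sol a(1) aT st MD]
      define hx where "hx = hnorm \<theta> (\<lambda>s. x (s + a))"
      have \<rho>hx: "0 \<le> \<rho> hx" "\<rho> hx \<le> \<rho> D" unfolding hx_def
        using classN_nn[OF \<rho> hs(2)] classN_mono[OF \<rho> hs(2) hs(1)] by auto
      have "\<tau>' * (1 + \<rho> hx) \<le> \<tau>' * (1 + \<rho> D)" using \<rho>hx \<tau>' by (simp add: mult_left_mono)
      then have "\<tau>' * (1 + \<rho> hx) \<le> t" using a(2) unfolding \<tau>_def by linarith
      then have tt: "\<tau>' \<le> t / (1 + \<rho> hx)" using \<rho>hx by (simp add: field_simps)
      have Ha: "Hout \<theta> h0 (\<lambda>s. x (s + a)) = Sup (Y ` {a - \<theta>..a})" unfolding Hout_shift Y_def ..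
      have Ha_nn: "0 \<le> Hout \<theta> h0 (\<lambda>s. x (s + a))" unfolding Ha Y_def
        by (rule Sup_Y_nonneg[OF sol h0c]) (use a \<tau> \<theta> in auto)
      have "Sup (Y ` {a - \<theta>..a}) \<le> Sup (Y ` {-\<theta>..T})" unfolding Y_def
        by (rule Sup_Y_mono[OF sol h0c]) (use a \<tau> \<theta> in auto)
      then have HaC: "Hout \<theta> h0 (\<lambda>s. x (s + a)) \<le> C" using Ha Gb mC by linarith
      have t0: "0 \<le> t / (1 + \<rho> hx)" using a \<tau> \<rho>hx by simp
      have "\<beta> (Hout \<theta> h0 (\<lambda>s. x (s + a))) (t / (1 + \<rho> hx)) \<le> \<beta> C (t / (1 + \<rho> hx))"
        by (rule KL_mono1[OF \<beta> t0 Ha_nn HaC])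
      also have "\<dots> \<le> \<beta> C \<tau>'" by (rule KL_mono2[OF \<beta> C \<tau>'(1) tt])
      finally have "\<beta> (Hout \<theta> h0 (\<lambda>s. x (s + a))) (t / (1 + \<rho> hx)) \<le> \<epsilon>" using \<tau>'(2) by linarith
      then show "Y (a + t) \<le> max \<epsilon> (max (\<kappa> (Sup (Y ` {a - \<theta>..T}))) g)" using sa unfolding hx_def by linarith
    qed
    have "\<forall>s. real K * (\<tau> + \<theta>) \<le> s \<longrightarrow> s \<le> T \<longrightarrow> Y s \<le> max \<epsilon> g"
      by (rule iterate_bound[OF \<theta> _ bdd \<kappa> \<kappa>lt \<epsilon> g \<tau> \<delta>(1) \<delta>(2) S0 step K])
         (simp add: Y_def)
    then have "Y T \<le> max \<epsilon> g" using T0 by blast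
    then show "norm (h0 (x T)) \<le> \<gamma> (unorm u) + \<epsilon>" unfolding Y_def g_def[symmetric] using g \<epsilon> by linarith
  qed
qed

lemma OL:
  assumes FC: "forward_complete f \<theta>"
  shows "OL_IOS_hist f \<theta> h0"
proof -
  have \<sigma>0: "classK (\<lambda>r. (r + \<pi> r) + \<beta> (\<pi> r) 0)"
    by (rule classK_add[OF classK_add[OF classK_id \<pi>] classN_comp[OF classK_N[OF KL_K0[OF \<beta>]] \<pi>]])
  have "\<exists>\<beta>' \<gamma>'. classKL \<beta>' \<and> classN \<gamma>' \<and> (\<forall>\<xi>\<in>Xspace \<theta>. \<forall>u\<in>Mspace. ess_bounded u \<longrightarrow>
     (\<forall>T\<ge>0. \<forall>x. is_sol f \<theta> \<xi> u T x \<longrightarrow> norm (h0 (x T)) \<le> \<beta>' (hnorm \<theta> \<xi>) T + \<gamma>' (unorm u)))"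
  proof (rule IOS_template[OF \<sigma>0 \<gamma>])
    fix \<xi> assume "\<xi> \<in> Xspace \<theta>"
    then show "0 \<le> hnorm \<theta> \<xi>" unfolding Xspace_def by (intro hnorm_nonneg) (use \<theta> in auto)
  next
    fix \<xi> u T x
    assume \<xi>: "\<xi> \<in> Xspace \<theta>" and uM: "u \<in> Mspace" and ub: "ess_bounded u" and T: "0 \<le> T"
      and sol: "is_sol f \<theta> \<xi> u T x"
    note sb = sol_basic[OF \<theta> h0c \<xi> sol T]
    have Hp: "Hout \<theta> h0 \<xi> \<le> \<pi> (hnorm \<theta> \<xi>)" by (rule Hout_le[OF \<xi> T sol])
    have "\<beta> (Hout \<theta> h0 \<xi>) 0 \<le> \<beta> (\<pi> (hnorm \<theta> \<xi>)) 0" by (rule KL_mono1[OF \<beta> _ sb(4) Hp]) simp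
    have "norm (h0 (x T)) \<le> Sup ((\<lambda>s. norm (h0 (x s))) ` {-\<theta>..T})"
      by (intro cSup_upper sb(9)) (use T \<theta> in auto)
    also have "\<dots> \<le> max (max (Hout \<theta> h0 \<xi>) (\<beta> (Hout \<theta> h0 \<xi>) 0)) (\<gamma> (unorm u))"
      by (rule glob[OF \<xi> uM ub T sol])
    also have "\<dots> \<le> (hnorm \<theta> \<xi> + \<pi> (hnorm \<theta> \<xi>)) + \<beta> (\<pi> (hnorm \<theta> \<xi>)) 0 + \<gamma> (unorm u)"
      using sb(4) sb(5) KL_nn[OF \<beta> sb(4), of 0] classN_nn[OF \<gamma> unorm_nonneg[OF ub]]
        classN_nn[OF \<pi> sb(5)] Hp \<open>\<beta> (Hout \<theta> h0 \<xi>) 0 \<le> _\<close> by auto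
    finally show "norm (h0 (x T)) \<le> (hnorm \<theta> \<xi> + \<pi> (hnorm \<theta> \<xi>)) + \<beta> (\<pi> (hnorm \<theta> \<xi>)) 0 + \<gamma> (unorm u)" .
  next
    fix r \<epsilon> :: real assume "0 \<le> r" "0 < \<epsilon>"
    then show "\<exists>T0. \<forall>\<xi> u T x. \<xi> \<in> Xspace \<theta> \<and> u \<in> Mspace \<and> ess_bounded u \<and> 0 \<le> T \<and> is_sol f \<theta> \<xi> u T x
     \<and> hnorm \<theta> \<xi> \<le> r \<and> unorm u \<le> r \<and> T0 \<le> T \<longrightarrow> norm (h0 (x T)) \<le> \<gamma> (unorm u) + \<epsilon>"
      by (rule uag)
  qed
  then have ios: "IOS f \<theta> h0" unfolding IOS_def using FC by blast
  define \<sigma>1 where "\<sigma>1 s = (s + \<beta> s 0) + \<gamma> s" for s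
  have \<sigma>1: "classK \<sigma>1" unfolding \<sigma>1_def
    by (rule classK_add[OF classK_add[OF classK_id classK_N[OF KL_K0[OF \<beta>]]] \<gamma>])
  have "\<forall>\<xi>\<in>Xspace \<theta>. \<forall>u\<in>Mspace. ess_bounded u \<longrightarrow> (\<forall>T\<ge>0. \<forall>x. is_sol f \<theta> \<xi> u T x \<longrightarrow>
          norm (h0 (x T)) \<le> max (\<sigma>1 (Hout \<theta> h0 \<xi>)) (\<sigma>1 (unorm u)))"
  proof (intro ballI allI impI)
    fix \<xi> u T x
    assume \<xi>: "\<xi> \<in> Xspace \<theta>" and uM: "u \<in> Mspace" and ub: "ess_bounded u" and T: "0 \<le> T"
      and sol: "is_sol f \<theta> \<xi> u T x"
    note sb = sol_basic[OF \<theta> h0c \<xi> sol T]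
    have v: "0 \<le> unorm u" by (rule unorm_nonneg[OF ub])
    have "norm (h0 (x T)) \<le> Sup ((\<lambda>s. norm (h0 (x s))) ` {-\<theta>..T})"
      by (intro cSup_upper sb(9)) (use T \<theta> in auto)
    also have "\<dots> \<le> max (max (Hout \<theta> h0 \<xi>) (\<beta> (Hout \<theta> h0 \<xi>) 0)) (\<gamma> (unorm u))"
      by (rule glob[OF \<xi> uM ub T sol])
    also have "\<dots> \<le> max (\<sigma>1 (Hout \<theta> h0 \<xi>)) (\<sigma>1 (unorm u))"
      unfolding \<sigma>1_def
      using sb(4) v KL_nn[OF \<beta> sb(4), of 0] KL_nn[OF \<beta> v, of 0] classN_nn[OF \<gamma> v]
        classN_nn[OF \<gamma> sb(4)] by auto
    finally show "norm (h0 (x T)) \<le> max (\<sigma>1 (Hout \<theta> h0 \<xi>)) (\<sigma>1 (unorm u))" .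
  qed
  then show ?thesis unfolding OL_IOS_hist_def using ios \<sigma>1 by blast
qed

end





locale P3 =
  fixes f :: "(real \<Rightarrow> 'n::euclidean_space) \<Rightarrow> 'm::euclidean_space \<Rightarrow> 'n"
    and h0 :: "'n \<Rightarrow> 'p::euclidean_space" and \<theta> :: real
    and \<beta> \<kappa> \<gamma>
  assumes \<theta>: "\<theta> > 0" and h0c: "continuous_on UNIV h0"
    and \<beta>: "classKL \<beta>" and \<kappa>: "classN \<kappa>" and \<gamma>: "classN \<gamma>" and \<kappa>lt: "\<forall>s>0. \<kappa> s < s"
    and Hyp: "\<forall>\<xi>\<in>Xspace \<theta>. \<forall>u\<in>Mspace. ess_bounded u \<longrightarrow> (\<forall>t\<ge>0. \<forall>x. is_sol f \<theta> \<xi> u t x \<longrightarrow>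
           norm (h0 (x t)) \<le> max (\<beta> (Hout \<theta> h0 \<xi>) t) (max (\<kappa> (ymax \<theta> h0 x t)) (\<gamma> (unorm u))))"
begin

lemma glob:
  assumes \<xi>: "\<xi> \<in> Xspace \<theta>" and uM: "u \<in> Mspace" and ub: "ess_bounded u"
    and T: "0 \<le> T" and sol: "is_sol f \<theta> \<xi> u T x"
  shows "Sup ((\<lambda>s. norm (h0 (x s))) ` {-\<theta>..T}) \<le>
           max (max (Hout \<theta> h0 \<xi>) (\<beta> (Hout \<theta> h0 \<xi>) 0)) (\<gamma> (unorm u))"
proof -
  note sb = sol_basic[OF \<theta> h0c \<xi> sol T]
  have sh: "norm (h0 (x (0 + s))) \<le> max (\<beta> (Hout \<theta> h0 (\<lambda>s. x (s + 0))) s)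
           (max (\<kappa> (Sup ((\<lambda>s. norm (h0 (x s))) ` {0 - \<theta>..T}))) (\<gamma> (unorm u)))"
    if "s \<in> {0..T}" for s
    by (rule shift_apply[OF \<theta> h0c sol uM ub _ _ _ \<kappa> \<gamma>, where B="\<lambda>\<xi> t. \<beta> (Hout \<theta> h0 \<xi>) t"])
       (use that Hyp in auto)
  show ?thesis
  proof (rule global_bound[OF \<theta> T sb(8) sb(9) \<kappa> \<kappa>lt])
    show "\<forall>s\<in>{-\<theta>..0}. norm (h0 (x s)) \<le> max (Hout \<theta> h0 \<xi>) (\<beta> (Hout \<theta> h0 \<xi>) 0)"
      using sb(1) sb(6) by auto
    show "0 \<le> \<gamma> (unorm u)" by (rule classN_nn[OF \<gamma> unorm_nonneg[OF ub]])
    show "\<forall>s\<in>{0..T}. norm (h0 (x s)) \<le> max (max (Hout \<theta> h0 \<xi>) (\<beta> (Hout \<theta> h0 \<xi>) 0))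
            (max (\<kappa> (Sup ((\<lambda>s. norm (h0 (x s))) ` {-\<theta>..T}))) (\<gamma> (unorm u)))"
    proof
      fix s assume s: "s \<in> {0..T}"
      have "\<beta> (Hout \<theta> h0 \<xi>) s \<le> \<beta> (Hout \<theta> h0 \<xi>) 0" using KL_mono2[OF \<beta> sb(4)] s by auto
      then show "norm (h0 (x s)) \<le> max (max (Hout \<theta> h0 \<xi>) (\<beta> (Hout \<theta> h0 \<xi>) 0))
            (max (\<kappa> (Sup ((\<lambda>s. norm (h0 (x s))) ` {-\<theta>..T}))) (\<gamma> (unorm u)))"
        using sh[OF s] sb(2) by simp
    qed
  qed
qed

lemma uag:
  assumes r: "0 \<le> r" and \<epsilon>: "0 < \<epsilon>"
  shows "\<exists>T0. \<forall>\<xi> u T x. \<xi> \<in> Xspace \<theta> \<and> u \<in> Mspace \<and> ess_bounded u \<and> 0 \<le> T \<and> is_sol f \<theta> \<xi> u T x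
     \<and> Hout \<theta> h0 \<xi> \<le> r \<and> unorm u \<le> r \<and> T0 \<le> T \<longrightarrow> norm (h0 (x T)) \<le> \<gamma> (unorm u) + \<epsilon>"
proof -
  define C where "C = r + \<beta> r 0 + \<gamma> r"
  have \<beta>r: "0 \<le> \<beta> r 0" by (rule KL_nn[OF \<beta> r]) simp
  have \<gamma>r: "0 \<le> \<gamma> r" by (rule classN_nn[OF \<gamma> r])
  have C: "0 \<le> C" unfolding C_def using r \<beta>r \<gamma>r by simp
  obtain \<tau> where \<tau>: "0 \<le> \<tau>" "\<beta> C \<tau> \<le> \<epsilon>" using KL_lim[OF \<beta> C \<epsilon>] by blast
  obtain \<delta> where \<delta>: "0 < \<delta>" "\<forall>s. \<epsilon> < s \<longrightarrow> s \<le> C \<longrightarrow> \<kappa> s \<le> s - \<delta>"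
    using delta_exists[OF \<kappa> \<kappa>lt \<epsilon>] by blast
  obtain K :: nat where K: "C - real K * \<delta> \<le> \<epsilon>" using K_exists[OF \<delta>(1) \<epsilon>] by blast
  show ?thesis
  proof (intro exI[of _ "real K * (\<tau> + \<theta>)"] allI impI, elim conjE)
    fix \<xi> u T x
    assume \<xi>: "\<xi> \<in> Xspace \<theta>" and uM: "u \<in> Mspace" and ub: "ess_bounded u" and T: "0 \<le> T"
      and sol: "is_sol f \<theta> \<xi> u T x" and Hr: "Hout \<theta> h0 \<xi> \<le> r" and vr: "unorm u \<le> r"
      and T0: "real K * (\<tau> + \<theta>) \<le> T"
    note sb = sol_basic[OF \<theta> h0c \<xi> sol T]
    define Y where "Y s = norm (h0 (x s))" for s
    define g where "g = \<gamma> (unorm u)"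
    have g: "0 \<le> g" unfolding g_def by (rule classN_nn[OF \<gamma> unorm_nonneg[OF ub]])
    have gr: "g \<le> \<gamma> r" unfolding g_def by (rule classN_mono[OF \<gamma> unorm_nonneg[OF ub] vr])
    have Gb: "Sup (Y ` {-\<theta>..T}) \<le> max (max (Hout \<theta> h0 \<xi>) (\<beta> (Hout \<theta> h0 \<xi>) 0)) g"
      unfolding Y_def g_def by (rule glob[OF \<xi> uM ub T sol])
    have "\<beta> (Hout \<theta> h0 \<xi>) 0 \<le> \<beta> r 0" by (rule KL_mono1[OF \<beta> _ sb(4) Hr]) simp
    then have mC: "max (max (Hout \<theta> h0 \<xi>) (\<beta> (Hout \<theta> h0 \<xi>) 0)) g \<le> C"
      unfolding C_def using Hr gr r \<beta>r \<gamma>r sb(4) by auto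
    have bdd: "bdd_above (Y ` {-\<theta>..T})" unfolding Y_def by (rule sb(9))
    have S0: "\<forall>s\<in>{-\<theta>..T}. Y s \<le> max C g"
    proof
      fix s assume "s \<in> {-\<theta>..T}"
      then have "Y s \<le> Sup (Y ` {-\<theta>..T})" by (intro cSup_upper bdd) auto
      then show "Y s \<le> max C g" using Gb mC by linarith
    qed
    have step: "\<forall>a t. 0 \<le> a \<longrightarrow> \<tau> \<le> t \<longrightarrow> a + t \<le> T \<longrightarrow>
                  Y (a + t) \<le> max \<epsilon> (max (\<kappa> (Sup (Y ` {a - \<theta>..T}))) g)"
    proof (intro allI impI)
      fix a t assume a: "0 \<le> a" "\<tau> \<le> t" "a + t \<le> T"
      have sa: "Y (a + t) \<le> max (\<beta> (Hout \<theta> h0 (\<lambda>s. x (s + a))) t)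
           (max (\<kappa> (Sup (Y ` {a - \<theta>..T}))) g)"
        unfolding Y_def g_def
        by (rule shift_apply[OF \<theta> h0c sol uM ub _ _ _ \<kappa> \<gamma>, where B="\<lambda>\<xi> t. \<beta> (Hout \<theta> h0 \<xi>) t"])
           (use a \<tau> Hyp in auto)
      have Ha: "Hout \<theta> h0 (\<lambda>s. x (s + a)) = Sup (Y ` {a - \<theta>..a})" unfolding Hout_shift Y_def ..
      have Ha_nn: "0 \<le> Hout \<theta> h0 (\<lambda>s. x (s + a))" unfolding Ha Y_def
        by (rule Sup_Y_nonneg[OF sol h0c]) (use a \<tau> \<theta> in auto)
      have "Sup (Y ` {a - \<theta>..a}) \<le> Sup (Y ` {-\<theta>..T})" unfolding Y_def
        by (rule Sup_Y_mono[OF sol h0c]) (use a \<tau> \<theta> in auto)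
      then have HaC: "Hout \<theta> h0 (\<lambda>s. x (s + a)) \<le> C" using Ha Gb mC by linarith
      have "\<beta> (Hout \<theta> h0 (\<lambda>s. x (s + a))) t \<le> \<beta> C t"
        by (rule KL_mono1[OF \<beta> _ Ha_nn HaC]) (use a \<tau> in auto)
      also have "\<dots> \<le> \<beta> C \<tau>" by (rule KL_mono2[OF \<beta> C \<tau>(1) a(2)])
      finally have "\<beta> (Hout \<theta> h0 (\<lambda>s. x (s + a))) t \<le> \<epsilon>" using \<tau>(2) by linarith
      then show "Y (a + t) \<le> max \<epsilon> (max (\<kappa> (Sup (Y ` {a - \<theta>..T}))) g)" using sa by linarith
    qed
    have "\<forall>s. real K * (\<tau> + \<theta>) \<le> s \<longrightarrow> s \<le> T \<longrightarrow> Y s \<le> max \<epsilon> g"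
      by (rule iterate_bound[OF \<theta> _ bdd \<kappa> \<kappa>lt \<epsilon> g \<tau>(1) \<delta>(1) \<delta>(2) S0 step K])
         (simp add: Y_def)
    then have "Y T \<le> max \<epsilon> g" using T0 by blast
    then show "norm (h0 (x T)) \<le> \<gamma> (unorm u) + \<epsilon>" unfolding Y_def g_def[symmetric] using g \<epsilon> by linarith
  qed
qed

lemma SI:
  assumes FC: "forward_complete f \<theta>"
  shows "SI_IOS_hist f \<theta> h0"
proof -
  define P :: "(real \<Rightarrow> 'n) \<times> (real \<Rightarrow> 'm) \<times> real \<times> (real \<Rightarrow> 'n) \<Rightarrow> bool" where "P z \<longleftrightarrow> (case z of (\<xi>, u, T, x) \<Rightarrow>
     \<xi> \<in> Xspace \<theta> \<and> u \<in> Mspace \<and> ess_bounded u \<and> 0 \<le> T \<and> is_sol f \<theta> \<xi> u T x)" for z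
  define sz :: "(real \<Rightarrow> 'n) \<times> (real \<Rightarrow> 'm) \<times> real \<times> (real \<Rightarrow> 'n) \<Rightarrow> real" where "sz z = (case z of (\<xi>, u, T, x) \<Rightarrow> Hout \<theta> h0 \<xi>)" for z
  define v :: "(real \<Rightarrow> 'n) \<times> (real \<Rightarrow> 'm) \<times> real \<times> (real \<Rightarrow> 'n) \<Rightarrow> real" where "v z = (case z of (\<xi>, u, T, x) \<Rightarrow> unorm u)" for z
  define tm :: "(real \<Rightarrow> 'n) \<times> (real \<Rightarrow> 'm) \<times> real \<times> (real \<Rightarrow> 'n) \<Rightarrow> real" where "tm z = (case z of (\<xi>, u, T, x) \<Rightarrow> T)" for z
  define out :: "(real \<Rightarrow> 'n) \<times> (real \<Rightarrow> 'm) \<times> real \<times> (real \<Rightarrow> 'n) \<Rightarrow> real" where "out z = (case z of (\<xi>, u, T, x) \<Rightarrow> norm (h0 (x T)))" for z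
  have \<sigma>0: "classK (\<lambda>r. r + \<beta> r 0)" by (rule classK_add[OF classK_id classK_N[OF KL_K0[OF \<beta>]]])
  have nn: "\<forall>z. P z \<longrightarrow> 0 \<le> sz z \<and> 0 \<le> v z \<and> 0 \<le> tm z"
  proof (intro allI impI)
    fix z :: "(real \<Rightarrow> 'n) \<times> (real \<Rightarrow> 'm) \<times> real \<times> (real \<Rightarrow> 'n)" assume Pz: "P z"
    obtain \<xi> u T x where z: "z = (\<xi>, u, T, x)" by (cases z) auto
    from Pz show "0 \<le> sz z \<and> 0 \<le> v z \<and> 0 \<le> tm z"
      unfolding z P_def sz_def v_def tm_def using sol_basic(4)[OF \<theta> h0c] unorm_nonneg by auto
  qed
  have bound: "\<forall>z. P z \<longrightarrow> out z \<le> (\<lambda>r. r + \<beta> r 0) (sz z) + \<gamma> (v z)"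
  proof (intro allI impI)
    fix z :: "(real \<Rightarrow> 'n) \<times> (real \<Rightarrow> 'm) \<times> real \<times> (real \<Rightarrow> 'n)" assume Pz: "P z"
    obtain \<xi> u T x where z: "z = (\<xi>, u, T, x)" by (cases z) auto
    from Pz have \<xi>: "\<xi> \<in> Xspace \<theta>" and uM: "u \<in> Mspace" and ub: "ess_bounded u" and T: "0 \<le> T"
      and sol: "is_sol f \<theta> \<xi> u T x" unfolding z P_def by auto
    note sb = sol_basic[OF \<theta> h0c \<xi> sol T]
    have "norm (h0 (x T)) \<le> Sup ((\<lambda>s. norm (h0 (x s))) ` {-\<theta>..T})"
      by (intro cSup_upper sb(9)) (use T \<theta> in auto)
    also have "\<dots> \<le> max (max (Hout \<theta> h0 \<xi>) (\<beta> (Hout \<theta> h0 \<xi>) 0)) (\<gamma> (unorm u))"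
      by (rule glob[OF \<xi> uM ub T sol])
    also have "\<dots> \<le> Hout \<theta> h0 \<xi> + \<beta> (Hout \<theta> h0 \<xi>) 0 + \<gamma> (unorm u)"
      using sb(4) KL_nn[OF \<beta> sb(4), of 0] classN_nn[OF \<gamma> unorm_nonneg[OF ub]] by auto
    finally show "out z \<le> (\<lambda>r. r + \<beta> r 0) (sz z) + \<gamma> (v z)"
      unfolding z out_def sz_def v_def by simp
  qed
  have uag': "\<forall>r \<epsilon>. 0 \<le> r \<longrightarrow> 0 < \<epsilon> \<longrightarrow>
       (\<exists>T0. \<forall>z. P z \<longrightarrow> sz z \<le> r \<longrightarrow> v z \<le> r \<longrightarrow> T0 \<le> tm z \<longrightarrow> out z \<le> \<gamma> (v z) + \<epsilon>)"
  proof (intro allI impI)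
    fix r \<epsilon> :: real assume r: "0 \<le> r" and \<epsilon>: "0 < \<epsilon>"
    obtain T0 where T0: "\<forall>\<xi> u T x. \<xi> \<in> Xspace \<theta> \<and> u \<in> Mspace \<and> ess_bounded u \<and> 0 \<le> T \<and> is_sol f \<theta> \<xi> u T x
     \<and> Hout \<theta> h0 \<xi> \<le> r \<and> unorm u \<le> r \<and> T0 \<le> T \<longrightarrow> norm (h0 (x T)) \<le> \<gamma> (unorm u) + \<epsilon>"
      using uag[OF r \<epsilon>] by blast
    show "\<exists>T0. \<forall>z. P z \<longrightarrow> sz z \<le> r \<longrightarrow> v z \<le> r \<longrightarrow> T0 \<le> tm z \<longrightarrow> out z \<le> \<gamma> (v z) + \<epsilon>"
    proof (intro exI[of _ T0] allI impI)
      fix z :: "(real \<Rightarrow> 'n) \<times> (real \<Rightarrow> 'm) \<times> real \<times> (real \<Rightarrow> 'n)"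
      assume "P z" "sz z \<le> r" "v z \<le> r" "T0 \<le> tm z"
      moreover obtain \<xi> u T x where z: "z = (\<xi>, u, T, x)" by (cases z) auto
      ultimately show "out z \<le> \<gamma> (v z) + \<epsilon>" using T0 unfolding P_def sz_def v_def tm_def out_def by auto
    qed
  qed
  obtain \<beta>' \<gamma>' where R: "classKL \<beta>'" "classN \<gamma>'" "\<forall>z. P z \<longrightarrow> out z \<le> \<beta>' (sz z) (tm z) + \<gamma>' (v z)"
    using KL_from_UAG[OF \<sigma>0 \<gamma> nn bound uag'] by blast
  have "\<forall>\<xi>\<in>Xspace \<theta>. \<forall>u\<in>Mspace. ess_bounded u \<longrightarrow> (\<forall>T\<ge>0. \<forall>x. is_sol f \<theta> \<xi> u T x \<longrightarrow>
          norm (h0 (x T)) \<le> \<beta>' (Hout \<theta> h0 \<xi>) T + \<gamma>' (unorm u))"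
  proof (intro ballI allI impI)
    fix \<xi> u T x assume "\<xi> \<in> Xspace \<theta>" "u \<in> Mspace" "ess_bounded u" "0 \<le> T" "is_sol f \<theta> \<xi> u T x"
    then have "P (\<xi>, u, T, x)" unfolding P_def by auto
    then show "norm (h0 (x T)) \<le> \<beta>' (Hout \<theta> h0 \<xi>) T + \<gamma>' (unorm u)"
      using R(3) unfolding out_def sz_def tm_def v_def by fastforce
  qed
  then show ?thesis unfolding SI_IOS_hist_def using FC R(1,2) by blast
qed

end



theorem proposition4p2:
  fixes f :: "(real \<Rightarrow> real ^ 'n) \<Rightarrow> real ^ 'm \<Rightarrow> real ^ 'n"
    and h0 :: "real ^ 'n \<Rightarrow> real ^ 'p"
    and \<theta> :: real
  assumes theta_pos: "\<theta> > 0"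
    and f_lip: "loc_lipschitz f \<theta>"
    and f_bdd: "bounded_on_bounded f \<theta>"
    and h0_cont: "continuous_on UNIV h0"
    and h0_bound: "\<exists>\<pi>. classN \<pi> \<and> (\<forall>v. norm (h0 v) \<le> \<pi> (norm v))"
  shows
   "(GS f \<theta> \<and>
      (\<exists>\<beta> \<kappa> \<gamma>. classKL \<beta> \<and> classN \<kappa> \<and> classN \<gamma> \<and> (\<forall>s>0. \<kappa> s < s) \<and>
        (\<forall>\<xi>\<in>Xspace \<theta>. \<forall>u\<in>Mspace. ess_bounded u \<longrightarrow> (\<forall>t\<ge>0. \<forall>x. is_sol f \<theta> \<xi> u t x \<longrightarrow>
           norm (h0 (x t)) \<le> max (\<beta> (hnorm \<theta> \<xi>) t)
                                  (max (\<kappa> (ymax \<theta> h0 x t)) (\<gamma> (unorm u))))))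
     \<longrightarrow> IOS f \<theta> h0)
  \<and> (UBIBS f \<theta> \<and>
      (\<exists>\<beta> \<rho> \<kappa> \<gamma>. classKL \<beta> \<and> classN \<rho> \<and> classN \<kappa> \<and> classN \<gamma> \<and> (\<forall>s>0. \<kappa> s < s) \<and>
        (\<forall>\<xi>\<in>Xspace \<theta>. \<forall>u\<in>Mspace. ess_bounded u \<longrightarrow> (\<forall>t\<ge>0. \<forall>x. is_sol f \<theta> \<xi> u t x \<longrightarrow>
           norm (h0 (x t)) \<le> max (\<beta> (Hout \<theta> h0 \<xi>) (t / (1 + \<rho> (hnorm \<theta> \<xi>))))
                                  (max (\<kappa> (ymax \<theta> h0 x t)) (\<gamma> (unorm u))))))
     \<longrightarrow> OL_IOS_hist f \<theta> h0)
  \<and> (forward_complete f \<theta> \<and>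
      (\<exists>\<beta> \<kappa> \<gamma>. classKL \<beta> \<and> classN \<kappa> \<and> classN \<gamma> \<and> (\<forall>s>0. \<kappa> s < s) \<and>
        (\<forall>\<xi>\<in>Xspace \<theta>. \<forall>u\<in>Mspace. ess_bounded u \<longrightarrow> (\<forall>t\<ge>0. \<forall>x. is_sol f \<theta> \<xi> u t x \<longrightarrow>
           norm (h0 (x t)) \<le> max (\<beta> (Hout \<theta> h0 \<xi>) t)
                                  (max (\<kappa> (ymax \<theta> h0 x t)) (\<gamma> (unorm u))))))
     \<longrightarrow> SI_IOS_hist f \<theta> h0)"
proof -
  obtain \<pi> where \<pi>: "classN \<pi>" "\<forall>v. norm (h0 v) \<le> \<pi> (norm v)" using h0_bound by blast
  show ?thesis
  proof (intro conjI impI)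
    assume H: "GS f \<theta> \<and>
      (\<exists>\<beta> \<kappa> \<gamma>. classKL \<beta> \<and> classN \<kappa> \<and> classN \<gamma> \<and> (\<forall>s>0. \<kappa> s < s) \<and>
        (\<forall>\<xi>\<in>Xspace \<theta>. \<forall>u\<in>Mspace. ess_bounded u \<longrightarrow> (\<forall>t\<ge>0. \<forall>x. is_sol f \<theta> \<xi> u t x \<longrightarrow>
           norm (h0 (x t)) \<le> max (\<beta> (hnorm \<theta> \<xi>) t)
                                  (max (\<kappa> (ymax \<theta> h0 x t)) (\<gamma> (unorm u))))))"
    from H have G: "GS f \<theta>" by (rule conjunct1)
    from H obtain \<beta> \<kappa> \<gamma> where hyp: "classKL \<beta>" "classN \<kappa>" "classN \<gamma>" "\<forall>s>0. \<kappa> s < s"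
        "\<forall>\<xi>\<in>Xspace \<theta>. \<forall>u\<in>Mspace. ess_bounded u \<longrightarrow> (\<forall>t\<ge>0. \<forall>x. is_sol f \<theta> \<xi> u t x \<longrightarrow>
           norm (h0 (x t)) \<le> max (\<beta> (hnorm \<theta> \<xi>) t)
                                  (max (\<kappa> (ymax \<theta> h0 x t)) (\<gamma> (unorm u))))"
      by (elim conjE exE) (intro that)
    from G have FC: "forward_complete f \<theta>" unfolding GS_def by (rule conjunct1)
    from G obtain \<sigma> \<mu> where \<sigma>: "classKinf \<sigma>" and \<mu>: "classN \<mu>"
      and GSb: "\<forall>\<xi>\<in>Xspace \<theta>. \<forall>u\<in>Mspace. ess_bounded u \<longrightarrow> (\<forall>T\<ge>0. \<forall>x. is_sol f \<theta> \<xi> u T x \<longrightarrow>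
          norm (x T) \<le> \<sigma> (hnorm \<theta> \<xi>) + \<mu> (unorm u))"
      unfolding GS_def by (elim conjE exE) (intro that)
    have \<sigma>N: "classN \<sigma>" using \<sigma> unfolding classKinf_def classK_def by (elim conjE)
    have "P1 f h0 \<theta> \<beta> \<kappa> \<gamma> \<pi> \<sigma> \<mu>"
      by (rule P1.intro[OF theta_pos h0_cont hyp(1-4) \<pi> \<sigma>N \<mu> GSb hyp(5)])
    then show "IOS f \<theta> h0" by (rule P1.IOS[OF _ FC])
  next
    assume H: "UBIBS f \<theta> \<and>
      (\<exists>\<beta> \<rho> \<kappa> \<gamma>. classKL \<beta> \<and> classN \<rho> \<and> classN \<kappa> \<and> classN \<gamma> \<and> (\<forall>s>0. \<kappa> s < s) \<and>
        (\<forall>\<xi>\<in>Xspace \<theta>. \<forall>u\<in>Mspace. ess_bounded u \<longrightarrow> (\<forall>t\<ge>0. \<forall>x. is_sol f \<theta> \<xi> u t x \<longrightarrow>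
           norm (h0 (x t)) \<le> max (\<beta> (Hout \<theta> h0 \<xi>) (t / (1 + \<rho> (hnorm \<theta> \<xi>))))
                                  (max (\<kappa> (ymax \<theta> h0 x t)) (\<gamma> (unorm u))))))"
    from H have G: "UBIBS f \<theta>" by (rule conjunct1)
    from H obtain \<beta> \<rho> \<kappa> \<gamma> where hyp: "classKL \<beta>" "classN \<rho>" "classN \<kappa>" "classN \<gamma>" "\<forall>s>0. \<kappa> s < s"
        "\<forall>\<xi>\<in>Xspace \<theta>. \<forall>u\<in>Mspace. ess_bounded u \<longrightarrow> (\<forall>t\<ge>0. \<forall>x. is_sol f \<theta> \<xi> u t x \<longrightarrow>
           norm (h0 (x t)) \<le> max (\<beta> (Hout \<theta> h0 \<xi>) (t / (1 + \<rho> (hnorm \<theta> \<xi>))))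
                                  (max (\<kappa> (ymax \<theta> h0 x t)) (\<gamma> (unorm u))))"
      by (elim conjE exE) (intro that)
    from G have FC: "forward_complete f \<theta>" unfolding UBIBS_def by (rule conjunct1)
    from G obtain \<sigma> \<mu> c where \<sigma>: "classKinf \<sigma>" and \<mu>: "classN \<mu>" and c: "c > 0"
      and UBb: "\<forall>\<xi>\<in>Xspace \<theta>. \<forall>u\<in>Mspace. ess_bounded u \<longrightarrow> (\<forall>T\<ge>0. \<forall>x. is_sol f \<theta> \<xi> u T x \<longrightarrow>
          norm (x T) \<le> \<sigma> (hnorm \<theta> \<xi>) + \<mu> (unorm u) + c)"
      unfolding UBIBS_def by (elim conjE exE) (intro that)
    have \<sigma>N: "classN \<sigma>" using \<sigma> unfolding classKinf_def classK_def by (elim conjE)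
    have "P2 f h0 \<theta> \<beta> \<rho> \<kappa> \<gamma> \<pi> \<sigma> \<mu> c"
      by (rule P2.intro[OF theta_pos h0_cont hyp(1-5) \<pi> \<sigma>N \<mu> c UBb hyp(6)])
    then show "OL_IOS_hist f \<theta> h0" by (rule P2.OL[OF _ FC])
  next
    assume H: "forward_complete f \<theta> \<and>
      (\<exists>\<beta> \<kappa> \<gamma>. classKL \<beta> \<and> classN \<kappa> \<and> classN \<gamma> \<and> (\<forall>s>0. \<kappa> s < s) \<and>
        (\<forall>\<xi>\<in>Xspace \<theta>. \<forall>u\<in>Mspace. ess_bounded u \<longrightarrow> (\<forall>t\<ge>0. \<forall>x. is_sol f \<theta> \<xi> u t x \<longrightarrow>
           norm (h0 (x t)) \<le> max (\<beta> (Hout \<theta> h0 \<xi>) t)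
                                  (max (\<kappa> (ymax \<theta> h0 x t)) (\<gamma> (unorm u))))))"
    from H have FC: "forward_complete f \<theta>" by (rule conjunct1)
    from H obtain \<beta> \<kappa> \<gamma> where hyp: "classKL \<beta>" "classN \<kappa>" "classN \<gamma>" "\<forall>s>0. \<kappa> s < s"
        "\<forall>\<xi>\<in>Xspace \<theta>. \<forall>u\<in>Mspace. ess_bounded u \<longrightarrow> (\<forall>t\<ge>0. \<forall>x. is_sol f \<theta> \<xi> u t x \<longrightarrow>
           norm (h0 (x t)) \<le> max (\<beta> (Hout \<theta> h0 \<xi>) t)
                                  (max (\<kappa> (ymax \<theta> h0 x t)) (\<gamma> (unorm u))))"
      by (elim conjE exE) (intro that)
    have "P3 f h0 \<theta> \<beta> \<kappa> \<gamma>"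
      by (rule P3.intro[OF theta_pos h0_cont hyp])
    then show "SI_IOS_hist f \<theta> h0" by (rule P3.SI[OF _ FC])
  qed
qed

end
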